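(* Consider the iterates of SAS-ADMM and fix $k\ge0$ with $\eta_k\in(0,1/\nu)$. Then for every $w=(x;y;\lambda)\in\Omega$, $$F(w)-F(\tilde w^k)+(w-\tilde w^k)^\top\mathcal J(w)\ge\frac12\Big\{\|w-w^{k+1}\|_{\tilde Q_k}^2-\|w-w^k\|_{\tilde Q_k}^2+\|w^k-\tilde w^k\|_{\tilde G_k}^2\Big\}+\zeta^k(x),$$ where $$\tilde Q_k=\begin{bmatrix}\mathcal D_k&0&0\\0&L+\big(1-\frac{\tau s}{\tau+s}\big)\beta B^\top B&-\frac{\tau}{\tau+s}B^\top\\0&-\frac{\tau}{\tau+s}B&\frac{1}{\beta(\tau+s)}I\end{bmatrix},\qquad \tilde G_k=\begin{bmatrix}\mathcal D_k&0&0\\0&L+(1-s)\beta B^\top B&(s-1)B^\top\\0&(s-1)B&\frac{2-\tau-s}{\beta}I\end{bmatrix}.$$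
   Context: Setting. $\mathcal X\subset\mathbb R^{n_1}$, $\mathcal Y\subset\mathbb R^{n_2}$ are nonempty closed convex sets; $A\in\mathbb R^{n\times n_1}$, $B\in\mathbb R^{n\times n_2}$, $b\in\mathbb R^n$; $g:\mathcal Y\to\mathbb R\cup\{+\infty\}$ is proper convex; $f=\frac1N\sum_{j=1}^N f_j$, each $f_j$ real-valued, convex and continuously differentiable on an open set containing $\mathcal X$. The problem is $\min\{f(x)+g(y): x\in\mathcal X,\ y\in\mathcal Y,\ Ax+By=b\}$. A fixed symmetric positive definite $H\in\mathbb R^{n_1\times n_1}$ and a constant $\nu>0$ satisfy $\|\nabla f_j(x_1)-\nabla f_j(x_2)\|_{H^{-1}}\le \nu\|x_1-x_2\|_H$ for all $x_1,x_2\in\mathcal X$ and all $j$. For a symmetric matrix $G$, $\|v\|_G^2:=v^\top G v$ (also when $G$ is indefinite); $G_1\succeq G_2$ means $G_1-G_2$ is positive semidefinite. $\mathcal L_\beta(x,y,\lambda)=f(x)+g(y)-\lambda^\top(Ax+By-b)+\frac\beta2\|Ax+By-b\|^2$. $\Delta:=\{(\tau,s)\in\mathbb R^2:\ \tau+s>0,\ \tau\le1,\ -\tau^2-s^2-\tau s+\tau+s+1\ge0\}$. Subroutine xsub. Inputs: $x^k\in\mathcal X$, $\breve x^k$, $h\in\mathbb R^{n_1}$, an integer $m_k\ge1$, $\eta_k>0$, a symmetric matrix $M_k$. Set $x_1=x^k$, $\breve x_1=\breve x^k$. For $t=1,\dots,m_k$: draw $\xi_t$ uniformly from $\{1,\dots,N\}$,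 independently of everything generated before; set $\beta_t=2/(t+1)$, $\gamma_t=2/(t\eta_k)$, $\hat x_t=\beta_t\breve x_t+(1-\beta_t)x_t$, $d_t=\nabla f_{\xi_t}(\hat x_t)+e_t$ where $e_t$ is a random vector whose conditional expectation given all previously generated random quantities and $\xi_t$ is $0$; $\breve x_{t+1}=\arg\min_{x\in\mathcal X}\{\langle d_t+h,x\rangle+\frac{\gamma_t}2\|x-\breve x_t\|_H^2+\frac12\|x-x^k\|_{M_k}^2\}$; $x_{t+1}=\beta_t\breve x_{t+1}+(1-\beta_t)x_t$. Output $x^{k+1}=x_{m_k+1}$, $\breve x^{k+1}=\breve x_{m_k+1}$. Put $\delta_t=\nabla f(\hat x_t)-d_t$ (inner quantities of outer iteration $k$), and for $x\in\mathcal X$ $$\zeta^k(x)=\frac{2}{m_k(m_k+1)}\Big[\frac1{\eta_k}\big(\|x-\breve x^{k+1}\|_H^2-\|x-\breve x^k\|_H^2\big)-\sum_{t=1}^{m_k}t\langle\delta_t,\breve x_t-x\rangle-\frac{\eta_k}{4(1-\eta_k\nu)}\sum_{t=1}^{m_k}t^2\|\delta_t\|_{H^{-1}}^2\Big].$$ Algorithm SAS-ADMM. Parameters: $\beta>0$, the matrix $H$, a symmetric positive semidefinite $L\in\mathbb R^{n_2\times n_2}$, $(\tau,s)\in\Delta$. Start: $(x^0,y^0,\lambda^0)\in\mathcal X\times\mathcal Y\times\mathbb R^n$, $\breve x^0=x^0$. For $k=0,1,\dots$: choose an integer $m_k\ge1$, $\eta_k>0$, and a symmetric $M_k$ with $\mathcal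 D_k:=M_k-\beta A^\top A\succeq0$; set $h^k=-A^\top[\lambda^k-\beta(Ax^k+By^k-b)]$; compute $(x^{k+1},\breve x^{k+1})$ by xsub with inputs $x^k,\breve x^k,h^k,m_k,\eta_k,M_k$; $\lambda^{k+1/2}=\lambda^k-\tau\beta(Ax^{k+1}+By^k-b)$; $y^{k+1}\in\arg\min_{y\in\mathcal Y}\mathcal L_\beta(x^{k+1},y,\lambda^{k+1/2})+\frac12\|y-y^k\|_L^2$ (a minimizer is assumed to exist); $\lambda^{k+1}=\lambda^{k+1/2}-s\beta(Ax^{k+1}+By^{k+1}-b)$. Notation. $\Omega=\mathcal X\times\mathcal Y\times\mathbb R^n$; $w=(x;y;\lambda)$; $F(w)=f(x)+g(y)$; $\mathcal J(w)=(-A^\top\lambda;\,-B^\top\lambda;\,Ax+By-b)$; $w^k=(x^k;y^k;\lambda^k)$; $\tilde\lambda^k=\lambda^k-\beta(Ax^{k+1}+By^k-b)$; $\tilde w^k=(x^{k+1};y^{k+1};\tilde\lambda^k)$. *)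

theory Defs
  imports "HOL-Analysis.Analysis" "HOL-Library.Extended_Real"
begin

definition qf :: "real^'n^'n \<Rightarrow> real^'n \<Rightarrow> real" where
  "qf G v = v \<bullet> (G *v v)"

definition symmetric_mat :: "real^'n^'n \<Rightarrow> bool" where
  "symmetric_mat G \<longleftrightarrow> transpose G = G"

definition psd :: "real^'n^'n \<Rightarrow> bool" where
  "psd G \<longleftrightarrow> symmetric_mat G \<and> (\<forall>v. 0 \<le> qf G v)"

definition pd :: "real^'n^'n \<Rightarrow> bool" where
  "pd G \<longleftrightarrow> symmetric_mat G \<and> (\<forall>v. v \<noteq> 0 \<longrightarrow> 0 < qf G v)"

definition proper_convex_on :: "'a::real_vector set \<Rightarrow> ('a \<Rightarrow> ereal) \<Rightarrow> bool" where
  "proper_convex_on Y g \<longleftrightarrow>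
     (\<forall>y\<in>Y. g y \<noteq> -\<infinity>) \<and> (\<exists>y\<in>Y. g y \<noteq> \<infinity>) \<and>
     (\<forall>u\<in>Y. \<forall>v\<in>Y. \<forall>t::real. 0 \<le> t \<and> t \<le> 1 \<longrightarrow>
        g ((1 - t) *\<^sub>R u + t *\<^sub>R v) \<le> ereal (1 - t) * g u + ereal t * g v)"

definition Delta_set :: "(real \<times> real) set" where
  "Delta_set = {(\<tau>, s). \<tau> + s > 0 \<and> \<tau> \<le> 1 \<and> 0 \<le> - (\<tau> * \<tau>) - s * s - \<tau> * s + \<tau> + s + 1}"

definition block3_qf ::
  "real^'a^'a \<Rightarrow> real^'b^'a \<Rightarrow> real^'c^'a \<Rightarrow>
   real^'a^'b \<Rightarrow> real^'b^'b \<Rightarrow> real^'c^'b \<Rightarrow>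
   real^'a^'c \<Rightarrow> real^'b^'c \<Rightarrow> real^'c^'c \<Rightarrow>
   ((real^'a) \<times> (real^'b) \<times> (real^'c)) \<Rightarrow> real" where
  "block3_qf M11 M12 M13 M21 M22 M23 M31 M32 M33 w =
     (case w of (u, v, l) \<Rightarrow>
        u \<bullet> (M11 *v u) + u \<bullet> (M12 *v v) + u \<bullet> (M13 *v l)
      + v \<bullet> (M21 *v u) + v \<bullet> (M22 *v v) + v \<bullet> (M23 *v l)
      + l \<bullet> (M31 *v u) + l \<bullet> (M32 *v v) + l \<bullet> (M33 *v l))"

definition Qtilde_qf ::
  "real^'a^'a \<Rightarrow> real^'b^'b \<Rightarrow> real^'b^'c \<Rightarrow> real \<Rightarrow> real \<Rightarrow> real \<Rightarrow>
   ((real^'a) \<times> (real^'b) \<times> (real^'c)) \<Rightarrow> real" where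
  "Qtilde_qf D L B \<beta> \<tau> s =
     block3_qf D 0 0
               0 (L + ((1 - \<tau> * s / (\<tau> + s)) * \<beta>) *\<^sub>R (transpose B ** B)) ((- \<tau> / (\<tau> + s)) *\<^sub>R transpose B)
               0 ((- \<tau> / (\<tau> + s)) *\<^sub>R B) ((1 / (\<beta> * (\<tau> + s))) *\<^sub>R mat 1)"

definition Gtilde_qf ::
  "real^'a^'a \<Rightarrow> real^'b^'b \<Rightarrow> real^'b^'c \<Rightarrow> real \<Rightarrow> real \<Rightarrow> real \<Rightarrow>
   ((real^'a) \<times> (real^'b) \<times> (real^'c)) \<Rightarrow> real" where
  "Gtilde_qf D L B \<beta> \<tau> s =
     block3_qf D 0 0
               0 (L + ((1 - s) * \<beta>) *\<^sub>R (transpose B ** B)) ((s - 1) *\<^sub>R transpose B)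
               0 ((s - 1) *\<^sub>R B) (((2 - \<tau> - s) / \<beta>) *\<^sub>R mat 1)"

text \<open>zeta^k(x): bx_old = breve x^k, bx_new = breve x^{k+1}, bxs t = breve x_t, \<delta> t = delta_t.\<close>
definition zeta ::
  "real^'a^'a \<Rightarrow> real \<Rightarrow> real \<Rightarrow> nat \<Rightarrow> real^'a \<Rightarrow> real^'a \<Rightarrow>
   (nat \<Rightarrow> real^'a) \<Rightarrow> (nat \<Rightarrow> real^'a) \<Rightarrow> real^'a \<Rightarrow> real" where
  "zeta H \<nu> \<eta> m bx_old bx_new bxs \<delta> x =
     2 / (real m * (real m + 1)) *
       ((1 / \<eta>) * (qf H (x - bx_new) - qf H (x - bx_old))
        - (\<Sum>t = 1..m. real t * (\<delta> t \<bullet> (bxs t - x)))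
        - \<eta> / (4 * (1 - \<eta> * \<nu>)) * (\<Sum>t = 1..m. (real t)^2 * qf (matrix_inv H) (\<delta> t)))"

definition favg :: "nat \<Rightarrow> (nat \<Rightarrow> 'a \<Rightarrow> real) \<Rightarrow> 'a \<Rightarrow> real" where
  "favg N fj z = (1 / real N) * (\<Sum>j = 1..N. fj j z)"

definition gavg :: "nat \<Rightarrow> (nat \<Rightarrow> 'a \<Rightarrow> 'b::real_vector) \<Rightarrow> 'a \<Rightarrow> 'b" where
  "gavg N gj z = (1 / real N) *\<^sub>R (\<Sum>j = 1..N. gj j z)"

definition Lagr :: "(real^'a \<Rightarrow> real) \<Rightarrow> (real^'b \<Rightarrow> ereal) \<Rightarrow> real^'a^'c \<Rightarrow> real^'b^'c \<Rightarrow> real^'c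
    \<Rightarrow> real \<Rightarrow> real^'a \<Rightarrow> real^'b \<Rightarrow> real^'c \<Rightarrow> ereal" where
  "Lagr f g A B b \<beta> x y l =
     ereal (f x) + g y + ereal (- (l \<bullet> (A *v x + B *v y - b)) + \<beta> / 2 * (norm (A *v x + B *v y - b))^2)"

end

theory Submission
  imports Defs
begin

lemma sym_inner: assumes "symmetric_mat (G::real^'n^'n)" shows "a \<bullet> (G *v b) = b \<bullet> (G *v a)"
proof -
  have "a \<bullet> (G *v b) = (a v* G) \<bullet> b" by (simp add: dot_lmul_matrix)
  also have "a v* G = transpose G *v a" by simp
  also have "\<dots> = G *v a" using assms by (simp add: symmetric_mat_def)
  finally show ?thesis by (simp add: inner_commute)
qed

lemma qf_add: assumes "symmetric_mat G"
  shows "qf G (a + b) = qf G a + 2 * (a \<bullet> (G *v b)) + qf G b"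
  using sym_inner[OF assms, of a b]
  by (simp add: qf_def matrix_vector_right_distrib inner_add_left inner_add_right)

lemma qf_diff: assumes "symmetric_mat G"
  shows "qf G (a - b) = qf G a - 2 * (a \<bullet> (G *v b)) + qf G b"
  using sym_inner[OF assms, of a b]
  by (simp add: qf_def matrix_vector_mult_diff_distrib inner_diff_left inner_diff_right)

lemma qf_scale: "qf G (c *\<^sub>R a) = c^2 * qf G a"
  by (simp add: qf_def matrix_vector_mult_scaleR power2_eq_square)

lemma qf_at: "qf (transpose A ** A) v = (A *v v) \<bullet> (A *v v)"
  by (simp add: qf_def matrix_vector_mul_assoc[symmetric] dot_lmul_matrix[symmetric] inner_commute)

lemma pd_sym: "pd H \<Longrightarrow> symmetric_mat H" by (simp add: pd_def)

lemma pd_inv: assumes "pd (H::real^'n^'n)"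
  shows "H ** matrix_inv H = mat 1" "matrix_inv H ** H = mat 1"
proof -
  have "\<forall>x. H *v x = 0 \<longrightarrow> x = 0"
    using assms by (auto simp: pd_def qf_def)
  then have "\<exists>B. B ** H = mat 1" using matrix_left_invertible_ker by blast
  then have inv: "invertible H" using invertible_left_inverse by blast
  then have "\<exists>A'. H ** A' = mat 1 \<and> A' ** H = mat 1" by (simp add: invertible_def)
  then have "H ** matrix_inv H = mat 1 \<and> matrix_inv H ** H = mat 1"
    unfolding matrix_inv_def by (rule someI_ex)
  then show "H ** matrix_inv H = mat 1" "matrix_inv H ** H = mat 1" by auto
qed

lemma H_Hinv: assumes "pd H" shows "H *v (matrix_inv H *v d) = d"
  by (simp add: matrix_vector_mul_assoc pd_inv[OF assms])

lemma qf_inv: assumes "pd H" shows "qf (matrix_inv H) d = qf H (matrix_inv H *v d)"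
  by (simp add: qf_def H_Hinv[OF assms] inner_commute)

lemma qf_pd_nonneg: "pd H \<Longrightarrow> 0 \<le> qf H v"
  by (cases "v = 0") (auto simp: pd_def qf_def intro: less_imp_le)

lemma qf_inv_nonneg: "pd H \<Longrightarrow> 0 \<le> qf (matrix_inv H) d"
  by (simp add: qf_inv qf_pd_nonneg)

lemma young: assumes H: "pd H" and c: "c > 0"
  shows "d \<bullet> v \<le> c / 2 * qf H v + 1 / (2 * c) * qf (matrix_inv H) d"
proof -
  let ?u = "matrix_inv H *v d"
  have S: "symmetric_mat H" using H by (simp add: pd_def)
  have e1: "d \<bullet> v = ?u \<bullet> (H *v v)"
    using sym_inner[OF S, of ?u v] H_Hinv[OF H, of d] by (simp add: inner_commute)
  have "0 \<le> qf H (c *\<^sub>R v - ?u)" by (rule qf_pd_nonneg[OF H])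
  also have "\<dots> = c^2 * qf H v - 2 * c * (d \<bullet> v) + qf (matrix_inv H) d"
    using qf_diff[OF S, of "c *\<^sub>R v" ?u] sym_inner[OF S, of v ?u]
    by (simp add: qf_scale qf_inv[OF H] e1 matrix_vector_mult_scaleR)
  finally have A: "2 * c * (d \<bullet> v) \<le> c^2 * qf H v + qf (matrix_inv H) d" by simp
  have B: "2 * c * (c / 2 * qf H v + 1 / (2 * c) * qf (matrix_inv H) d) = c^2 * qf H v + qf (matrix_inv H) d"
    using c by (simp add: field_simps power2_eq_square)
  show ?thesis using A B c by (metis mult_le_cancel_left_pos zero_less_mult_iff zero_less_numeral)
qed

lemma qf_convex: assumes S: "symmetric_mat G" and P: "\<forall>v. 0 \<le> qf G v"
  and t: "0 \<le> t" "t \<le> 1"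
  shows "qf G (t *\<^sub>R a + (1 - t) *\<^sub>R b) \<le> t * qf G a + (1 - t) * qf G b"
proof -
  have e1: "qf G (t *\<^sub>R a + (1 - t) *\<^sub>R b) = t^2 * qf G a + 2 * (t * (1 - t)) * (a \<bullet> (G *v b)) + (1 - t)^2 * qf G b"
    using qf_add[OF S, of "t *\<^sub>R a" "(1 - t) *\<^sub>R b"]
    by (simp add: qf_scale matrix_vector_mult_scaleR)
  have e2: "qf G (a - b) = qf G a - 2 * (a \<bullet> (G *v b)) + qf G b" by (rule qf_diff[OF S])
  have "t * qf G a + (1 - t) * qf G b - qf G (t *\<^sub>R a + (1 - t) *\<^sub>R b) = t * (1 - t) * qf G (a - b)"
    unfolding e1 e2 by (simp add: power2_eq_square algebra_simps)
  moreover have "0 \<le> t * (1 - t) * qf G (a - b)" using P t by simp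
  ultimately show ?thesis by linarith
qed

lemma lin_quad_nonneg: assumes "\<forall>t::real. 0 < t \<and> t \<le> 1 \<longrightarrow> 0 \<le> t * A + t^2 * c"
  shows "0 \<le> (A::real)"
proof (rule ccontr)
  assume "\<not> 0 \<le> A"
  then have A: "A < 0" by simp
  define K where "K = 2 * \<bar>c\<bar> + 1"
  have K: "K > 0" by (simp add: K_def add_nonneg_pos)
  define t where "t = min 1 (- A / K)"
  have "0 < - A / K" using A K by (intro divide_pos_pos) auto
  then have tp: "0 < t" "t \<le> 1" by (auto simp: t_def)
  have "t \<le> - A / K" by (simp add: t_def)
  then have "t * K \<le> (- A / K) * K" using K by (intro mult_right_mono) auto
  then have tK: "t * K \<le> - A" using K by simp
  have "t * \<bar>c\<bar> \<le> t * K / 2" using tp by (simp add: K_def algebra_simps)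
  moreover have "t * c \<le> t * \<bar>c\<bar>" using tp by (simp add: mult_left_mono)
  ultimately have "A + t * c < 0" using tK A by linarith
  then have "t * (A + t * c) < 0" using tp by (simp add: mult_pos_neg)
  then have "t * A + t^2 * c < 0" by (simp add: power2_eq_square algebra_simps)
  with assms tp show False by auto
qed

lemma three_point:
  fixes H M :: "real^'n^'n"
  assumes SH: "symmetric_mat H" and SM: "symmetric_mat M" and X: "convex X"
    and u: "u \<in> X" and z: "z \<in> X"
    and opt: "\<forall>z\<in>X. p \<bullet> u + \<gamma> / 2 * qf H (u - a) + 1 / 2 * qf M (u - b)
                     \<le> p \<bullet> z + \<gamma> / 2 * qf H (z - a) + 1 / 2 * qf M (z - b)"
  shows "p \<bullet> u + \<gamma> / 2 * qf H (u - a) + 1 / 2 * qf M (u - b) + \<gamma> / 2 * qf H (z - u) + 1 / 2 * qf M (z - u)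
         \<le> p \<bullet> z + \<gamma> / 2 * qf H (z - a) + 1 / 2 * qf M (z - b)"
proof -
  define obj where "obj w = p \<bullet> w + \<gamma> / 2 * qf H (w - a) + 1 / 2 * qf M (w - b)" for w
  define A where "A = p \<bullet> (z - u) + \<gamma> * ((u - a) \<bullet> (H *v (z - u))) + (u - b) \<bullet> (M *v (z - u))"
  define c where "c = \<gamma> / 2 * qf H (z - u) + 1 / 2 * qf M (z - u)"
  have exp: "obj (u + t *\<^sub>R (z - u)) = obj u + t * A + t^2 * c" for t
  proof -
    have v1: "u + t *\<^sub>R (z - u) - a = (u - a) + t *\<^sub>R (z - u)" by simp
    have v2: "u + t *\<^sub>R (z - u) - b = (u - b) + t *\<^sub>R (z - u)" by simp
    have e1: "qf H (u + t *\<^sub>R (z - u) - a) = qf H (u - a) + 2 * t * ((u - a) \<bullet> (H *v (z - u))) + t^2 * qf H (z - u)"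
      unfolding v1 qf_add[OF SH] by (simp add: qf_scale matrix_vector_mult_scaleR)
    have e2: "qf M (u + t *\<^sub>R (z - u) - b) = qf M (u - b) + 2 * t * ((u - b) \<bullet> (M *v (z - u))) + t^2 * qf M (z - u)"
      unfolding v2 qf_add[OF SM] by (simp add: qf_scale matrix_vector_mult_scaleR)
    have e3: "p \<bullet> (u + t *\<^sub>R (z - u)) = p \<bullet> u + t * (p \<bullet> (z - u))" by (simp add: inner_add_right)
    have R: "\<And>pu pz Q0 X Q1 R0 Y R1::real. pu + t*pz + \<gamma>/2*(Q0 + 2*t*X + t^2*Q1) + 1/2*(R0 + 2*t*Y + t^2*R1)
       = (pu + \<gamma>/2*Q0 + 1/2*R0) + t*(pz + \<gamma>*X + Y) + t^2*(\<gamma>/2*Q1 + 1/2*R1)"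
      by (simp add: algebra_simps)
    show ?thesis unfolding obj_def A_def c_def e1 e2 e3 by (rule R)
  qed
  have "\<forall>t::real. 0 < t \<and> t \<le> 1 \<longrightarrow> 0 \<le> t * A + t^2 * c"
  proof (intro allI impI)
    fix t :: real assume t: "0 < t \<and> t \<le> 1"
    have "u + t *\<^sub>R (z - u) = (1 - t) *\<^sub>R u + t *\<^sub>R z" by (simp add: algebra_simps)
    then have "u + t *\<^sub>R (z - u) \<in> X" using X u z t by (simp add: convex_def)
    then have "obj u \<le> obj (u + t *\<^sub>R (z - u))" using opt unfolding obj_def by blast
    then show "0 \<le> t * A + t^2 * c" using exp[of t] by simp
  qed
  then have "0 \<le> A" by (rule lin_quad_nonneg)
  moreover have "obj z = obj u + A + c" using exp[of 1] by simp
  ultimately show ?thesis unfolding obj_def c_def by simp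
qed

lemma line_deriv:
  fixes f :: "real^'n \<Rightarrow> real"
  assumes "(f has_derivative (\<lambda>h. G \<bullet> h)) (at (b + t *\<^sub>R v))"
  shows "((\<lambda>s. f (b + s *\<^sub>R v)) has_real_derivative (G \<bullet> v)) (at t)"
proof -
  have l: "((\<lambda>s. b + s *\<^sub>R v) has_derivative (\<lambda>h. h *\<^sub>R v)) (at t)"
    by (auto intro!: derivative_eq_intros)
  have "((\<lambda>s. f (b + s *\<^sub>R v)) has_derivative (\<lambda>h. G \<bullet> (h *\<^sub>R v))) (at t)"
    using has_derivative_compose[OF l assms] by simp
  then have "((\<lambda>s. f (b + s *\<^sub>R v)) has_derivative (\<lambda>h. (G \<bullet> v) * h)) (at t)"
    by (simp add: mult.commute)
  then show ?thesis by (simp add: has_field_derivative_def)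
qed

lemma seg_in: assumes "convex X" "a \<in> X" "b \<in> X" "0 \<le> t" "t \<le> 1"
  shows "b + t *\<^sub>R (a - b) \<in> X"
proof -
  have "b + t *\<^sub>R (a - b) = (1 - t) *\<^sub>R b + t *\<^sub>R a" by (simp add: algebra_simps)
  then show ?thesis using assms by (simp add: convex_def)
qed

lemma descent_j:
  fixes f :: "real^'n \<Rightarrow> real" and gr :: "real^'n \<Rightarrow> real^'n"
  assumes X: "convex X" and XU: "X \<subseteq> U"
    and diff: "\<forall>z\<in>U. (f has_derivative (\<lambda>h. gr z \<bullet> h)) (at z)"
    and H: "pd H" and nu: "\<nu> > 0"
    and lip: "\<forall>x1\<in>X. \<forall>x2\<in>X. sqrt (qf (matrix_inv H) (gr x1 - gr x2)) \<le> \<nu> * sqrt (qf H (x1 - x2))"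
    and a: "a \<in> X" and b: "b \<in> X"
  shows "f a \<le> f b + gr b \<bullet> (a - b) + \<nu> / 2 * qf H (a - b)"
proof -
  define v where "v = a - b"
  define P where "P = qf H v"
  define \<phi> where "\<phi> t = f (b + t *\<^sub>R v) - t * (gr b \<bullet> v) - \<nu> * P * t^2 / 2" for t
  have "\<phi> 1 \<le> \<phi> 0"
  proof (rule DERIV_nonpos_imp_nonincreasing[of 0 1 \<phi>])
    fix t :: real assume t: "0 \<le> t" "t \<le> 1"
    define z where "z = b + t *\<^sub>R v"
    have zX: "z \<in> X" unfolding z_def v_def using seg_in[OF X a b t] .
    have d1: "((\<lambda>s. f (b + s *\<^sub>R v)) has_real_derivative (gr z \<bullet> v)) (at t)"
      using line_deriv[of f "gr z" b t v] diff zX XU unfolding z_def by blast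
    have "(\<phi> has_real_derivative (gr z \<bullet> v - gr b \<bullet> v - \<nu> * P * t)) (at t)"
      unfolding \<phi>_def by (rule derivative_eq_intros d1 refl | simp)+
    moreover have "gr z \<bullet> v - gr b \<bullet> v - \<nu> * P * t \<le> 0"
    proof (cases "t = 0")
      case True then show ?thesis by (simp add: z_def)
    next
      case False
      then have tp: "t > 0" using t by simp
      have Pn: "0 \<le> P" unfolding P_def by (rule qf_pd_nonneg[OF H])
      have "sqrt (qf (matrix_inv H) (gr z - gr b)) \<le> \<nu> * sqrt (qf H (z - b))"
        using lip zX b by blast
      moreover have "qf H (z - b) = t^2 * P" by (simp add: z_def P_def qf_scale)
      ultimately have "sqrt (qf (matrix_inv H) (gr z - gr b)) \<le> \<nu> * (t * sqrt P)"
        using tp Pn by (simp add: real_sqrt_mult)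
      then have "(sqrt (qf (matrix_inv H) (gr z - gr b)))^2 \<le> (\<nu> * (t * sqrt P))^2"
        by (rule power_mono) (use qf_inv_nonneg[OF H, of "gr z - gr b"] in simp)
      then have Q: "qf (matrix_inv H) (gr z - gr b) \<le> \<nu>^2 * t^2 * P"
        using qf_inv_nonneg[OF H] Pn by (simp add: power_mult_distrib)
      have "(gr z - gr b) \<bullet> v \<le> (\<nu> * t) / 2 * P + 1 / (2 * (\<nu> * t)) * qf (matrix_inv H) (gr z - gr b)"
        unfolding P_def by (rule young[OF H]) (use nu tp in simp)
      also have "\<dots> \<le> (\<nu> * t) / 2 * P + 1 / (2 * (\<nu> * t)) * (\<nu>^2 * t^2 * P)"
        using Q nu tp by (intro add_left_mono mult_left_mono) auto
      also have "\<dots> = \<nu> * P * t" using nu tp by (simp add: field_simps power2_eq_square)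
      finally show ?thesis by (simp add: inner_diff_left)
    qed
    ultimately show "\<exists>y. (\<phi> has_real_derivative y) (at t) \<and> y \<le> 0" by blast
  qed simp
  then show ?thesis unfolding \<phi>_def v_def P_def by simp
qed

lemma grad_ineq_j:
  fixes f :: "real^'n \<Rightarrow> real" and gr :: "real^'n \<Rightarrow> real^'n"
  assumes X: "convex X" and XU: "X \<subseteq> U"
    and diff: "\<forall>z\<in>U. (f has_derivative (\<lambda>h. gr z \<bullet> h)) (at z)"
    and cvx: "convex_on X f"
    and x: "x \<in> X" and z: "z \<in> X"
  shows "f x + gr x \<bullet> (z - x) \<le> f z"
proof -
  define v where "v = z - x"
  define \<psi> where "\<psi> t = f (x + t *\<^sub>R v)" for t
  have d: "(\<psi> has_real_derivative (gr x \<bullet> v)) (at 0)"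
    unfolding \<psi>_def using line_deriv[of f "gr x" x 0 v] diff x XU by auto
  then have "(\<psi> has_real_derivative (gr x \<bullet> v)) (at 0 within {0<..})"
    by (rule has_field_derivative_at_within)
  then have lim: "((\<lambda>y. (\<psi> y - \<psi> 0) / (y - 0)) \<longlongrightarrow> gr x \<bullet> v) (at_right 0)"
    by (simp add: has_field_derivative_iff)
  have ev: "eventually (\<lambda>y. (\<psi> y - \<psi> 0) / (y - 0) \<le> \<psi> 1 - \<psi> 0) (at_right (0::real))"
  proof (rule eventually_mono)
    show "eventually (\<lambda>y. y \<in> {0<..<1}) (at_right (0::real))" by (rule eventually_at_right_real) simp
  next
    fix y :: real assume y: "y \<in> {0<..<1}"
    have "x + y *\<^sub>R v = (1 - y) *\<^sub>R x + y *\<^sub>R z" by (simp add: v_def algebra_simps)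
    then have "\<psi> y \<le> (1 - y) * \<psi> 0 + y * \<psi> 1"
      using convex_onD[OF cvx, of y x z] x z y by (simp add: \<psi>_def v_def)
    then have "\<psi> y - \<psi> 0 \<le> y * (\<psi> 1 - \<psi> 0)" by (simp add: algebra_simps)
    then show "(\<psi> y - \<psi> 0) / (y - 0) \<le> \<psi> 1 - \<psi> 0" using y by (simp add: divide_le_eq mult.commute)
  qed
  have "gr x \<bullet> v \<le> \<psi> 1 - \<psi> 0"
    by (rule tendsto_le[OF trivial_limit_at_right_real tendsto_const lim ev])
  then show ?thesis by (simp add: \<psi>_def v_def)
qed
lemma step_real:
  fixes \<beta> \<gamma> \<nu> c0 qD Fxt1 Fxh gA gB Fxt gC Fz D1 e1 e2 hx1 hxt hb1 M1 Mt Mb1 hz Hzb1 Mzb Hzb Mz Q :: real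
  assumes b: "0 < \<beta>" "\<beta> \<le> 1" and c0: "0 < c0" "c0 \<le> \<beta>*\<gamma> - \<nu>*\<beta>^2" and qD: "0 \<le> qD"
    and a: "Fxt1 \<le> Fxh + (1-\<beta>)*gA + \<beta>*gB + \<nu>/2*\<beta>^2*qD"
    and c: "Fxh + gA \<le> Fxt" and d: "Fxh + gC \<le> Fz" and link: "gB = gC + D1 + e1 + e2"
    and e: "hx1 = (1-\<beta>)*hxt + \<beta>*hb1" "M1 \<le> (1-\<beta>)*Mt + \<beta>*Mb1"
    and f: "D1 + hb1 - hz + \<gamma>/2*qD + 1/2*Mb1 + \<gamma>/2*Hzb1 + 1/2*Mzb \<le> \<gamma>/2*Hzb + 1/2*Mz"
    and g: "\<beta>*e1 \<le> c0/2*qD + \<beta>^2/(2*c0)*Q"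
  shows "(Fxt1 + hx1 + 1/2*M1) - (Fz + hz + 1/2*Mz) \<le> (1-\<beta>)*((Fxt + hxt + 1/2*Mt) - (Fz + hz + 1/2*Mz))
          + \<beta>*e2 + \<beta>*\<gamma>/2*(Hzb - Hzb1) + \<beta>^2/(2*c0)*Q - \<beta>/2*Mzb"
proof -
  have c': "(1-\<beta>)*(Fxh+gA) \<le> (1-\<beta>)*Fxt" using c b by (intro mult_left_mono) auto
  have d': "\<beta>*(Fxh+gC) \<le> \<beta>*Fz" using d b by (intro mult_left_mono) auto
  have f': "\<beta>*(D1 + hb1 - hz + \<gamma>/2*qD + 1/2*Mb1 + \<gamma>/2*Hzb1 + 1/2*Mzb) \<le> \<beta>*(\<gamma>/2*Hzb + 1/2*Mz)"
    using f b by (intro mult_left_mono) auto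
  have g': "c0*qD \<le> (\<beta>*\<gamma> - \<nu>*\<beta>^2)*qD" using c0 qD by (intro mult_right_mono) auto
  have s1: "Fxt1 \<le> (1-\<beta>)*(Fxh + gA) + \<beta>*(Fxh + gC) + \<beta>*D1 + \<beta>*e1 + \<beta>*e2 + \<nu>/2*\<beta>^2*qD"
    using a link by (simp add: algebra_simps)
  have s2: "Fxt1 \<le> (1-\<beta>)*Fxt + \<beta>*Fz + \<beta>*D1 + \<beta>*e1 + \<beta>*e2 + \<nu>/2*\<beta>^2*qD"
    using s1 c' d' by linarith
  have s3: "\<beta>*D1 + \<beta>*hb1 + \<beta>/2*Mb1 \<le> \<beta>*hz + \<beta>*\<gamma>/2*Hzb - \<beta>*\<gamma>/2*Hzb1 + \<beta>/2*Mz - \<beta>/2*Mzb - \<beta>*\<gamma>/2*qD"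
    using f' by (simp add: algebra_simps)
  have s4: "\<nu>/2*\<beta>^2*qD - \<beta>*\<gamma>/2*qD + \<beta>*e1 \<le> \<beta>^2/(2*c0)*Q"
    using g' g by (simp add: algebra_simps)
  have s5: "1/2*M1 \<le> (1-\<beta>)/2*Mt + \<beta>/2*Mb1" using e(2) by simp
  have s6: "(1-\<beta>)*((Fxt + hxt + 1/2*Mt) - (Fz + hz + 1/2*Mz)) = (1-\<beta>)*Fxt + (1-\<beta>)*hxt + (1-\<beta>)/2*Mt - Fz + \<beta>*Fz - hz + \<beta>*hz - 1/2*Mz + \<beta>/2*Mz"
    by (simp add: field_simps)
  have s7: "hx1 = (1-\<beta>)*hxt + \<beta>*hb1" by (rule e(1))
  have s8: "\<beta>*\<gamma>/2*(Hzb - Hzb1) = \<beta>*\<gamma>/2*Hzb - \<beta>*\<gamma>/2*Hzb1" by (simp add: right_diff_distrib)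
  show ?thesis unfolding s6 s8 using s2 s3 s4 s5 s7 by linarith
qed
lemma step_mult:
  fixes T \<eta> \<nu> P Q1 e2 R S W :: real
  assumes T: "T \<ge> 1" and eta: "\<eta> > 0" "\<eta> * \<nu> < 1"
    and h: "P \<le> (1 - 2/(T+1))*Q1 + 2/(T+1)*e2 + 2/(T+1)*(2/(T*\<eta>))/2*R
              + (2/(T+1))^2/(2*(4*(1-\<eta>*\<nu>)/(T*(T+1)*\<eta>)))*S - 2/(T+1)/2*W"
  shows "T*(T+1)*P \<le> T*(T-1)*Q1 + 2*T*e2 + 2/\<eta>*R + T^2*\<eta>/(2*(1-\<eta>*\<nu>))*S - T*W"
proof -
  have pos: "T*(T+1) > 0" using T by simp
  have nz: "T \<noteq> 0" "T + 1 \<noteq> 0" "\<eta> \<noteq> 0" "1 - \<eta>*\<nu> \<noteq> 0" using T eta by auto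
  have ps: "T > 0" "T + 1 > 0" "\<eta> > 0" "1 - \<eta>*\<nu> > 0" using T eta by auto
  have k1: "T*(T+1)*(1 - 2/(T+1)) = T*(T-1)" using ps by (simp add: divide_simps)
  have k2: "T*(T+1)*(2/(T+1)) = 2*T" using T by simp
  have k3: "T*(T+1)*(2/(T+1)*(2/(T*\<eta>))/2) = 2/\<eta>" using ps by (simp add: divide_simps)
  have k4: "T*(T+1)*((2/(T+1))^2/(2*(4*(1-\<eta>*\<nu>)/(T*(T+1)*\<eta>)))) = T^2*\<eta>/(2*(1-\<eta>*\<nu>))"
    using ps by (simp add: divide_simps power2_eq_square)
  have k5: "T*(T+1)*(2/(T+1)/2) = T" using ps by (simp add: divide_simps)
  have "T*(T+1)*P \<le> T*(T+1)*((1 - 2/(T+1))*Q1 + 2/(T+1)*e2 + 2/(T+1)*(2/(T*\<eta>))/2*R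
              + (2/(T+1))^2/(2*(4*(1-\<eta>*\<nu>)/(T*(T+1)*\<eta>)))*S - 2/(T+1)/2*W)"
    using h pos by (intro mult_left_mono) auto
  also have "\<dots> = (T*(T+1)*(1 - 2/(T+1)))*Q1 + (T*(T+1)*(2/(T+1)))*e2 + (T*(T+1)*(2/(T+1)*(2/(T*\<eta>))/2))*R
              + (T*(T+1)*((2/(T+1))^2/(2*(4*(1-\<eta>*\<nu>)/(T*(T+1)*\<eta>)))))*S - (T*(T+1)*(2/(T+1)/2))*W"
    by (simp add: algebra_simps)
  also have "\<dots> = T*(T-1)*Q1 + 2*T*e2 + 2/\<eta>*R + T^2*\<eta>/(2*(1-\<eta>*\<nu>))*S - T*W"
    unfolding k1 k2 k3 k4 k5 ..
  finally show ?thesis .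
qed

lemma c0_bound:
  fixes T \<eta> \<nu> :: real
  assumes T: "T \<ge> 1" and eta: "\<eta> > 0" "\<eta> * \<nu> < 1" and nu: "\<nu> > 0"
  shows "0 < 4*(1-\<eta>*\<nu>)/(T*(T+1)*\<eta>)"
    "4*(1-\<eta>*\<nu>)/(T*(T+1)*\<eta>) \<le> (2/(T+1))*(2/(T*\<eta>)) - \<nu>*(2/(T+1))^2"
proof -
  show "0 < 4*(1-\<eta>*\<nu>)/(T*(T+1)*\<eta>)" using T eta by (intro divide_pos_pos) auto
  have ps: "T > 0" "T + 1 > 0" "\<eta> > 0" using T eta by auto
  have e: "(2/(T+1))*(2/(T*\<eta>)) - 4*(1-\<eta>*\<nu>)/(T*(T+1)*\<eta>) = 4*\<nu>/(T*(T+1))"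
    using ps by (simp add: divide_simps)
  have "4*\<nu>/((T+1)*(T+1)) \<le> 4*\<nu>/(T*(T+1))"
    using T nu by (intro divide_left_mono mult_right_mono) auto
  then show "4*(1-\<eta>*\<nu>)/(T*(T+1)*\<eta>) \<le> (2/(T+1))*(2/(T*\<eta>)) - \<nu>*(2/(T+1))^2"
    using e by (simp add: power2_eq_square field_simps)
qed

definition Phi :: "(real^'n \<Rightarrow> real) \<Rightarrow> real^'n \<Rightarrow> real^'n^'n \<Rightarrow> real^'n \<Rightarrow> real^'n \<Rightarrow> real" where
  "Phi F h M xk u = F u + h \<bullet> u + 1/2 * qf M (u - xk)"

lemma step_vec:
  fixes F :: "real^'n \<Rightarrow> real" and Gr :: "real^'n \<Rightarrow> real^'n" and H M :: "real^'n^'n"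
    and h xk xt bt bt1 xt1 xh d z :: "real^'n" and T \<eta> \<nu> :: real
  assumes X: "convex X"
    and desc: "\<forall>a\<in>X. \<forall>b\<in>X. F a \<le> F b + Gr b \<bullet> (a - b) + \<nu> / 2 * qf H (a - b)"
    and gin: "\<forall>a\<in>X. \<forall>b\<in>X. F a + Gr a \<bullet> (b - a) \<le> F b"
    and H: "pd H" and SM: "symmetric_mat M" and PM: "\<forall>v. 0 \<le> qf M v"
    and nu: "\<nu> > 0" and eta: "\<eta> > 0" "\<eta> * \<nu> < 1" and T: "T \<ge> 1"
    and mem: "xt \<in> X" "bt \<in> X" "bt1 \<in> X" "z \<in> X"
    and rel: "xh = (2/(T+1)) *\<^sub>R bt + (1 - 2/(T+1)) *\<^sub>R xt"
             "xt1 = (2/(T+1)) *\<^sub>R bt1 + (1 - 2/(T+1)) *\<^sub>R xt"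
    and opt: "\<forall>z\<in>X. (d + h) \<bullet> bt1 + (2/(T*\<eta>)) / 2 * qf H (bt1 - bt) + 1 / 2 * qf M (bt1 - xk)
                  \<le> (d + h) \<bullet> z + (2/(T*\<eta>)) / 2 * qf H (z - bt) + 1 / 2 * qf M (z - xk)"
  shows "T*(T+1)*(Phi F h M xk xt1 - Phi F h M xk z) \<le> T*(T-1)*(Phi F h M xk xt - Phi F h M xk z)
          + 2*T*((Gr xh - d) \<bullet> (bt - z)) + 2/\<eta>*(qf H (z - bt) - qf H (z - bt1))
          + T^2*\<eta>/(2*(1-\<eta>*\<nu>)) * qf (matrix_inv H) (Gr xh - d) - T * qf M (z - bt1)"
proof -
  define \<beta> where "\<beta> = 2/(T+1)"
  define \<gamma> where "\<gamma> = 2/(T*\<eta>)"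
  define c0 where "c0 = 4*(1-\<eta>*\<nu>)/(T*(T+1)*\<eta>)"
  define g where "g = Gr xh"
  define \<delta> where "\<delta> = g - d"
  have b: "0 < \<beta>" "\<beta> \<le> 1" using T by (auto simp: \<beta>_def)
  have cb: "0 < c0" "c0 \<le> \<beta>*\<gamma> - \<nu>*\<beta>^2"
    using c0_bound[OF T eta nu] unfolding c0_def \<beta>_def \<gamma>_def by auto
  have SH: "symmetric_mat H" using H by (simp add: pd_def)
  have xhX: "xh \<in> X" unfolding rel(1) \<beta>_def[symmetric] using b mem by (intro convexD[OF X]) auto
  have xt1X: "xt1 \<in> X" unfolding rel(2) \<beta>_def[symmetric] using b mem by (intro convexD[OF X]) auto
  have qD: "0 \<le> qf H (bt1 - bt)" by (rule qf_pd_nonneg[OF H])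
  have v1: "xt1 - xh = (1-\<beta>) *\<^sub>R (xt - xh) + \<beta> *\<^sub>R (bt1 - xh)"
    unfolding rel \<beta>_def[symmetric] by (simp add: algebra_simps)
  have v2: "xt1 - xh = \<beta> *\<^sub>R (bt1 - bt)"
    unfolding rel \<beta>_def[symmetric] by (simp add: algebra_simps)
  have a0: "F xt1 \<le> F xh + g \<bullet> (xt1 - xh) + \<nu> / 2 * qf H (xt1 - xh)"
    using desc xt1X xhX unfolding g_def by blast
  have a: "F xt1 \<le> F xh + (1-\<beta>)*(g \<bullet> (xt - xh)) + \<beta>*(g \<bullet> (bt1 - xh)) + \<nu>/2*\<beta>^2*qf H (bt1 - bt)"
  proof -
    have "g \<bullet> (xt1 - xh) = (1-\<beta>)*(g \<bullet> (xt - xh)) + \<beta>*(g \<bullet> (bt1 - xh))"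
      unfolding v1 by (simp add: inner_add_right)
    moreover have "qf H (xt1 - xh) = \<beta>^2 * qf H (bt1 - bt)" unfolding v2 by (simp add: qf_scale)
    ultimately show ?thesis using a0 by simp
  qed
  have c: "F xh + g \<bullet> (xt - xh) \<le> F xt" using gin xhX mem unfolding g_def by blast
  have d': "F xh + g \<bullet> (z - xh) \<le> F z" using gin xhX mem unfolding g_def by blast
  have link: "g \<bullet> (bt1 - xh) = g \<bullet> (z - xh) + d \<bullet> (bt1 - z) + \<delta> \<bullet> (bt1 - bt) + \<delta> \<bullet> (bt - z)"
    unfolding \<delta>_def by (simp add: inner_diff_left inner_diff_right)
  have e1: "h \<bullet> xt1 = (1-\<beta>)*(h \<bullet> xt) + \<beta>*(h \<bullet> bt1)"
    unfolding rel \<beta>_def[symmetric] by (simp add: inner_add_right)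
  have e2: "qf M (xt1 - xk) \<le> (1-\<beta>)*qf M (xt - xk) + \<beta>*qf M (bt1 - xk)"
  proof -
    have "xt1 - xk = \<beta> *\<^sub>R (bt1 - xk) + (1 - \<beta>) *\<^sub>R (xt - xk)"
      unfolding rel \<beta>_def[symmetric] by (simp add: algebra_simps)
    then show ?thesis using qf_convex[OF SM PM, of \<beta> "bt1 - xk" "xt - xk"] b by simp
  qed
  have f0: "(d + h) \<bullet> bt1 + \<gamma> / 2 * qf H (bt1 - bt) + 1 / 2 * qf M (bt1 - xk) + \<gamma> / 2 * qf H (z - bt1) + 1 / 2 * qf M (z - bt1)
         \<le> (d + h) \<bullet> z + \<gamma> / 2 * qf H (z - bt) + 1 / 2 * qf M (z - xk)"
    by (rule three_point[OF SH SM X mem(3) mem(4)]) (use opt in \<open>simp add: \<gamma>_def\<close>)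
  have f: "d \<bullet> (bt1 - z) + h \<bullet> bt1 - h \<bullet> z + \<gamma>/2*qf H (bt1 - bt) + 1/2*qf M (bt1 - xk) + \<gamma>/2*qf H (z - bt1) + 1/2*qf M (z - bt1)
        \<le> \<gamma>/2*qf H (z - bt) + 1/2*qf M (z - xk)"
    using f0 by (simp add: inner_add_left inner_diff_right)
  have gy: "\<beta>*(\<delta> \<bullet> (bt1 - bt)) \<le> c0/2*qf H (bt1 - bt) + \<beta>^2/(2*c0)*qf (matrix_inv H) \<delta>"
  proof -
    have "\<delta> \<bullet> (bt1 - bt) \<le> (c0/\<beta>) / 2 * qf H (bt1 - bt) + 1 / (2 * (c0/\<beta>)) * qf (matrix_inv H) \<delta>"
      by (rule young[OF H]) (use b cb in simp)
    then have "\<beta>*(\<delta> \<bullet> (bt1 - bt)) \<le> \<beta>*((c0/\<beta>) / 2 * qf H (bt1 - bt) + 1 / (2 * (c0/\<beta>)) * qf (matrix_inv H) \<delta>)"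
      using b by (intro mult_left_mono) auto
    also have "\<dots> = c0/2*qf H (bt1 - bt) + \<beta>^2/(2*c0)*qf (matrix_inv H) \<delta>"
      using b cb by (simp add: divide_simps power2_eq_square)
    finally show ?thesis .
  qed
  have main: "(F xt1 + h \<bullet> xt1 + 1/2*qf M (xt1 - xk)) - (F z + h \<bullet> z + 1/2*qf M (z - xk))
      \<le> (1-\<beta>)*((F xt + h \<bullet> xt + 1/2*qf M (xt - xk)) - (F z + h \<bullet> z + 1/2*qf M (z - xk)))
          + \<beta>*(\<delta> \<bullet> (bt - z)) + \<beta>*\<gamma>/2*(qf H (z - bt) - qf H (z - bt1)) + \<beta>^2/(2*c0)*qf (matrix_inv H) \<delta> - \<beta>/2*qf M (z - bt1)"
    by (rule step_real[OF b cb qD a c d' link e1 e2 f gy])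
  have "T*(T+1)*((F xt1 + h \<bullet> xt1 + 1/2*qf M (xt1 - xk)) - (F z + h \<bullet> z + 1/2*qf M (z - xk)))
      \<le> T*(T-1)*((F xt + h \<bullet> xt + 1/2*qf M (xt - xk)) - (F z + h \<bullet> z + 1/2*qf M (z - xk)))
          + 2*T*(\<delta> \<bullet> (bt - z)) + 2/\<eta>*(qf H (z - bt) - qf H (z - bt1)) + T^2*\<eta>/(2*(1-\<eta>*\<nu>))*qf (matrix_inv H) \<delta> - T*qf M (z - bt1)"
    by (rule step_mult[OF T eta]) (use main in \<open>simp only: \<beta>_def \<gamma>_def c0_def\<close>)
  then show ?thesis unfolding Phi_def \<delta>_def g_def by simp
qed

lemma inner_loop:
  fixes F :: "real^'n \<Rightarrow> real" and Gr :: "real^'n \<Rightarrow> real^'n" and H M :: "real^'n^'n"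
    and h xk z :: "real^'n" and xi bxi xh d :: "nat \<Rightarrow> real^'n" and \<eta> \<nu> :: real and m :: nat
  assumes X: "convex X"
    and desc: "\<forall>a\<in>X. \<forall>b\<in>X. F a \<le> F b + Gr b \<bullet> (a - b) + \<nu> / 2 * qf H (a - b)"
    and gin: "\<forall>a\<in>X. \<forall>b\<in>X. F a + Gr a \<bullet> (b - a) \<le> F b"
    and H: "pd H" and SM: "symmetric_mat M" and PM: "\<forall>v. 0 \<le> qf M v"
    and nu: "\<nu> > 0" and eta: "\<eta> > 0" "\<eta> * \<nu> < 1"
    and init: "xi 1 \<in> X" "bxi 1 \<in> X"
    and step: "\<forall>t. 1 \<le> t \<and> t \<le> m \<longrightarrow>
        xh t = (2/(real t+1)) *\<^sub>R bxi t + (1 - 2/(real t+1)) *\<^sub>R xi t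
      \<and> bxi (t+1) \<in> X
      \<and> (\<forall>z\<in>X. (d t + h) \<bullet> bxi (t+1) + (2/(real t*\<eta>)) / 2 * qf H (bxi (t+1) - bxi t) + 1 / 2 * qf M (bxi (t+1) - xk)
                  \<le> (d t + h) \<bullet> z + (2/(real t*\<eta>)) / 2 * qf H (z - bxi t) + 1 / 2 * qf M (z - xk))
      \<and> xi (t+1) = (2/(real t+1)) *\<^sub>R bxi (t+1) + (1 - 2/(real t+1)) *\<^sub>R xi t"
    and z: "z \<in> X"
  shows "\<forall>n. n \<le> m \<longrightarrow> xi (n+1) \<in> X \<and> bxi (n+1) \<in> X \<and>
      real n*(real n+1)*(Phi F h M xk (xi (n+1)) - Phi F h M xk z)
      \<le> 2*(\<Sum>t=1..n. real t * ((Gr (xh t) - d t) \<bullet> (bxi t - z)))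
         + \<eta>/(2*(1-\<eta>*\<nu>))*(\<Sum>t=1..n. (real t)^2 * qf (matrix_inv H) (Gr (xh t) - d t))
         - (\<Sum>t=1..n. real t * qf M (z - bxi (t+1)))
         + 2/\<eta>*(qf H (z - bxi 1) - qf H (z - bxi (n+1)))
      \<and> real n*(real n+1)/2 * qf M (z - xi (n+1)) \<le> (\<Sum>t=1..n. real t * qf M (z - bxi (t+1)))"
proof (intro allI)
  fix n show "n \<le> m \<longrightarrow> xi (n+1) \<in> X \<and> bxi (n+1) \<in> X \<and>
      real n*(real n+1)*(Phi F h M xk (xi (n+1)) - Phi F h M xk z)
      \<le> 2*(\<Sum>t=1..n. real t * ((Gr (xh t) - d t) \<bullet> (bxi t - z)))
         + \<eta>/(2*(1-\<eta>*\<nu>))*(\<Sum>t=1..n. (real t)^2 * qf (matrix_inv H) (Gr (xh t) - d t))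
         - (\<Sum>t=1..n. real t * qf M (z - bxi (t+1)))
         + 2/\<eta>*(qf H (z - bxi 1) - qf H (z - bxi (n+1)))
      \<and> real n*(real n+1)/2 * qf M (z - xi (n+1)) \<le> (\<Sum>t=1..n. real t * qf M (z - bxi (t+1)))"
  proof (induction n)
    case 0 then show ?case using init by simp
  next
    case (Suc n)
    show ?case
    proof
      assume le: "Suc n \<le> m"
      then have IH: "xi (n+1) \<in> X \<and> bxi (n+1) \<in> X \<and>
        real n*(real n+1)*(Phi F h M xk (xi (n+1)) - Phi F h M xk z)
        \<le> 2*(\<Sum>t=1..n. real t * ((Gr (xh t) - d t) \<bullet> (bxi t - z)))
           + \<eta>/(2*(1-\<eta>*\<nu>))*(\<Sum>t=1..n. (real t)^2 * qf (matrix_inv H) (Gr (xh t) - d t))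
           - (\<Sum>t=1..n. real t * qf M (z - bxi (t+1)))
           + 2/\<eta>*(qf H (z - bxi 1) - qf H (z - bxi (n+1)))
        \<and> real n*(real n+1)/2 * qf M (z - xi (n+1)) \<le> (\<Sum>t=1..n. real t * qf M (z - bxi (t+1)))"
        using Suc.IH by simp
      have st: "xh (n+1) = (2/(real (n+1)+1)) *\<^sub>R bxi (n+1) + (1 - 2/(real (n+1)+1)) *\<^sub>R xi (n+1)
      \<and> bxi (n+1+1) \<in> X
      \<and> (\<forall>z\<in>X. (d (n+1) + h) \<bullet> bxi (n+1+1) + (2/(real (n+1)*\<eta>)) / 2 * qf H (bxi (n+1+1) - bxi (n+1)) + 1 / 2 * qf M (bxi (n+1+1) - xk)
                  \<le> (d (n+1) + h) \<bullet> z + (2/(real (n+1)*\<eta>)) / 2 * qf H (z - bxi (n+1)) + 1 / 2 * qf M (z - xk))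
      \<and> xi (n+1+1) = (2/(real (n+1)+1)) *\<^sub>R bxi (n+1+1) + (1 - 2/(real (n+1)+1)) *\<^sub>R xi (n+1)"
        using step le by auto
      define T where "T = real (n+1)"
      have T: "T \<ge> 1" by (simp add: T_def)
      have xiX: "xi (n+1+1) \<in> X"
      proof -
        have "0 \<le> 2/(real (n+1)+1)" "2/(real (n+1)+1) \<le> 1" by auto
        then show ?thesis using st IH by (auto intro!: convexD[OF X])
      qed
      have sv: "T*(T+1)*(Phi F h M xk (xi (n+1+1)) - Phi F h M xk z) \<le> T*(T-1)*(Phi F h M xk (xi (n+1)) - Phi F h M xk z)
          + 2*T*((Gr (xh (n+1)) - d (n+1)) \<bullet> (bxi (n+1) - z)) + 2/\<eta>*(qf H (z - bxi (n+1)) - qf H (z - bxi (n+1+1)))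
          + T^2*\<eta>/(2*(1-\<eta>*\<nu>)) * qf (matrix_inv H) (Gr (xh (n+1)) - d (n+1)) - T * qf M (z - bxi (n+1+1))"
        unfolding T_def
        apply (rule step_vec[OF X desc gin H SM PM nu eta])
        using IH st z by (simp, blast+)
      have cv: "qf M (z - xi (n+1+1)) \<le> (2/(T+1)) * qf M (z - bxi (n+1+1)) + (1 - 2/(T+1)) * qf M (z - xi (n+1))"
      proof -
        have eq: "z - xi (n+1+1) = (2/(T+1)) *\<^sub>R (z - bxi (n+1+1)) + (1 - 2/(T+1)) *\<^sub>R (z - xi (n+1))"
          using st unfolding T_def by (simp add: algebra_simps)
        show ?thesis unfolding eq by (rule qf_convex[OF SM PM]) (use T in auto)
      qed
      have Tn: "T - 1 = real n" "T = real n + 1" "real (Suc n) = real n + 1" by (simp_all add: T_def)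
      have sums: "(\<Sum>t=1..Suc n. f t) = (\<Sum>t=1..n. f t) + f (Suc n)" for f :: "nat \<Rightarrow> real"
        by simp
      have c2: "T*(T+1)/2 * qf M (z - xi (n+1+1)) \<le> (T+1)*T/2 * ((2/(T+1)) * qf M (z - bxi (n+1+1)) + (1 - 2/(T+1)) * qf M (z - xi (n+1)))"
        using cv T by (simp add: mult.commute)
      have c3: "(T+1)*T/2 * ((2/(T+1)) * qf M (z - bxi (n+1+1)) + (1 - 2/(T+1)) * qf M (z - xi (n+1)))
          = T * qf M (z - bxi (n+1+1)) + real n * (real n + 1)/2 * qf M (z - xi (n+1))"
        using T unfolding Tn(2) by (simp add: divide_simps) (simp add: algebra_simps)
      show "xi (Suc n+1) \<in> X \<and> bxi (Suc n+1) \<in> X \<and>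
        real (Suc n)*(real (Suc n)+1)*(Phi F h M xk (xi (Suc n+1)) - Phi F h M xk z)
        \<le> 2*(\<Sum>t=1..Suc n. real t * ((Gr (xh t) - d t) \<bullet> (bxi t - z)))
           + \<eta>/(2*(1-\<eta>*\<nu>))*(\<Sum>t=1..Suc n. (real t)^2 * qf (matrix_inv H) (Gr (xh t) - d t))
           - (\<Sum>t=1..Suc n. real t * qf M (z - bxi (t+1)))
           + 2/\<eta>*(qf H (z - bxi 1) - qf H (z - bxi (Suc n+1)))
        \<and> real (Suc n)*(real (Suc n)+1)/2 * qf M (z - xi (Suc n+1)) \<le> (\<Sum>t=1..Suc n. real t * qf M (z - bxi (t+1)))"
      proof (intro conjI)
        show "xi (Suc n+1) \<in> X" using xiX by simp
        show "bxi (Suc n+1) \<in> X" using st by simp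
        have k: "T^2*\<eta>/(2*(1-\<eta>*\<nu>)) * qf (matrix_inv H) (Gr (xh (n+1)) - d (n+1)) = \<eta>/(2*(1-\<eta>*\<nu>)) * (T^2 * qf (matrix_inv H) (Gr (xh (n+1)) - d (n+1)))"
          by simp
        show "real (Suc n)*(real (Suc n)+1)*(Phi F h M xk (xi (Suc n+1)) - Phi F h M xk z)
        \<le> 2*(\<Sum>t=1..Suc n. real t * ((Gr (xh t) - d t) \<bullet> (bxi t - z)))
           + \<eta>/(2*(1-\<eta>*\<nu>))*(\<Sum>t=1..Suc n. (real t)^2 * qf (matrix_inv H) (Gr (xh t) - d t))
           - (\<Sum>t=1..Suc n. real t * qf M (z - bxi (t+1)))
           + 2/\<eta>*(qf H (z - bxi 1) - qf H (z - bxi (Suc n+1)))"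
          using sv IH unfolding sums Tn(1) k unfolding T_def
          by (simp add: algebra_simps)
        show "real (Suc n)*(real (Suc n)+1)/2 * qf M (z - xi (Suc n+1)) \<le> (\<Sum>t=1..Suc n. real t * qf M (z - bxi (t+1)))"
        proof -
          have c4: "T*(T+1)/2 * qf M (z - xi (n+1+1)) \<le> T * qf M (z - bxi (n+1+1)) + real n * (real n + 1)/2 * qf M (z - xi (n+1))"
            using c2 c3 by linarith
          have e: "real (Suc n) = T" "Suc n + 1 = n + 1 + 1" by (simp_all add: T_def)
          show ?thesis unfolding sums e using c4 IH by linarith
        qed
      qed
    qed
  qed
qed

lemma x_part:
  fixes F :: "real^'n \<Rightarrow> real" and Gr :: "real^'n \<Rightarrow> real^'n" and H M :: "real^'n^'n"
    and h xk z :: "real^'n" and xi bxi xh d :: "nat \<Rightarrow> real^'n" and \<eta> \<nu> :: real and m :: nat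
  assumes X: "convex X"
    and desc: "\<forall>a\<in>X. \<forall>b\<in>X. F a \<le> F b + Gr b \<bullet> (a - b) + \<nu> / 2 * qf H (a - b)"
    and gin: "\<forall>a\<in>X. \<forall>b\<in>X. F a + Gr a \<bullet> (b - a) \<le> F b"
    and H: "pd H" and SM: "symmetric_mat M" and PM: "\<forall>v. 0 \<le> qf M v"
    and nu: "\<nu> > 0" and eta: "\<eta> > 0" "\<eta> * \<nu> < 1"
    and init: "xi 1 \<in> X" "bxi 1 \<in> X"
    and step: "\<forall>t. 1 \<le> t \<and> t \<le> m \<longrightarrow>
        xh t = (2/(real t+1)) *\<^sub>R bxi t + (1 - 2/(real t+1)) *\<^sub>R xi t
      \<and> bxi (t+1) \<in> X
      \<and> (\<forall>z\<in>X. (d t + h) \<bullet> bxi (t+1) + (2/(real t*\<eta>)) / 2 * qf H (bxi (t+1) - bxi t) + 1 / 2 * qf M (bxi (t+1) - xk)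
                  \<le> (d t + h) \<bullet> z + (2/(real t*\<eta>)) / 2 * qf H (z - bxi t) + 1 / 2 * qf M (z - xk))
      \<and> xi (t+1) = (2/(real t+1)) *\<^sub>R bxi (t+1) + (1 - 2/(real t+1)) *\<^sub>R xi t"
    and z: "z \<in> X"
    and m1: "m \<ge> 1"
  shows "Phi F h M xk (xi (m+1)) - Phi F h M xk z + 1/2 * qf M (z - xi (m+1))
          \<le> - zeta H \<nu> \<eta> m (bxi 1) (bxi (m+1)) bxi (\<lambda>t. Gr (xh t) - d t) z"
proof -
  have L: "real m*(real m+1)*(Phi F h M xk (xi (m+1)) - Phi F h M xk z)
      \<le> 2*(\<Sum>t=1..m. real t * ((Gr (xh t) - d t) \<bullet> (bxi t - z)))
         + \<eta>/(2*(1-\<eta>*\<nu>))*(\<Sum>t=1..m. (real t)^2 * qf (matrix_inv H) (Gr (xh t) - d t))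
         - (\<Sum>t=1..m. real t * qf M (z - bxi (t+1)))
         + 2/\<eta>*(qf H (z - bxi 1) - qf H (z - bxi (m+1)))"
   and C: "real m*(real m+1)/2 * qf M (z - xi (m+1)) \<le> (\<Sum>t=1..m. real t * qf M (z - bxi (t+1)))"
    using inner_loop[OF X desc gin H SM PM nu eta init step z] by auto
  define K where "K = real m*(real m+1)"
  have K: "K > 0" using m1 by (simp add: K_def)
  define SA where "SA = (\<Sum>t=1..m. real t * ((Gr (xh t) - d t) \<bullet> (bxi t - z)))"
  define SQ where "SQ = (\<Sum>t=1..m. (real t)^2 * qf (matrix_inv H) (Gr (xh t) - d t))"
  define SC where "SC = (\<Sum>t=1..m. real t * qf M (z - bxi (t+1)))"
  define P1 where "P1 = Phi F h M xk (xi (m+1))"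
  define Pz where "Pz = Phi F h M xk z"
  define QM where "QM = qf M (z - xi (m+1))"
  define Hd where "Hd = qf H (z - bxi 1) - qf H (z - bxi (m+1))"
  define R where "R = 2*SA + \<eta>/(2*(1-\<eta>*\<nu>))*SQ + 2/\<eta>*Hd"
  have L': "K*(P1 - Pz) \<le> 2*SA + \<eta>/(2*(1-\<eta>*\<nu>))*SQ - SC + 2/\<eta>*Hd"
    using L unfolding K_def SA_def SQ_def SC_def P1_def Pz_def Hd_def .
  have C': "K/2 * QM \<le> SC" using C unfolding K_def SC_def QM_def .
  have E: "K * (P1 - Pz + 1/2 * QM) = K*(P1 - Pz) + K/2 * QM" by (simp add: algebra_simps)
  have "K * (P1 - Pz + 1/2 * QM) \<le> R" unfolding E R_def using L' C' by linarith
  moreover have "K * (- zeta H \<nu> \<eta> m (bxi 1) (bxi (m+1)) bxi (\<lambda>t. Gr (xh t) - d t) z) = R"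
  proof -
    have "zeta H \<nu> \<eta> m (bxi 1) (bxi (m+1)) bxi (\<lambda>t. Gr (xh t) - d t) z
       = 2 / K * ((1/\<eta>) * (- Hd) - SA - \<eta> / (4 * (1 - \<eta> * \<nu>)) * SQ)"
      unfolding zeta_def K_def Hd_def SA_def SQ_def by simp
    then show ?thesis using K eta unfolding R_def by (simp add: field_simps)
  qed
  ultimately have "K * (P1 - Pz + 1/2 * QM) \<le> K * (- zeta H \<nu> \<eta> m (bxi 1) (bxi (m+1)) bxi (\<lambda>t. Gr (xh t) - d t) z)"
    by simp
  then have "P1 - Pz + 1/2 * QM \<le> - zeta H \<nu> \<eta> m (bxi 1) (bxi (m+1)) bxi (\<lambda>t. Gr (xh t) - d t) z"
    using K mult_le_cancel_left_pos by blast
  then show ?thesis unfolding P1_def Pz_def QM_def .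
qed

lemma avg_gen:
  fixes fj :: "nat \<Rightarrow> real^'n \<Rightarrow> real" and gradj :: "nat \<Rightarrow> real^'n \<Rightarrow> real^'n"
  assumes N: "N \<ge> 1" and h: "\<forall>j\<in>{1..N}. fj j p + gradj j q \<bullet> v \<le> fj j r + e"
  shows "favg N fj p + gavg N gradj q \<bullet> v \<le> favg N fj r + e"
proof -
  have "(\<Sum>j=1..N. fj j p + gradj j q \<bullet> v) \<le> (\<Sum>j=1..N. fj j r + e)"
    using h by (intro sum_mono) auto
  then have s: "(\<Sum>j=1..N. fj j p) + (\<Sum>j=1..N. gradj j q \<bullet> v) \<le> (\<Sum>j=1..N. fj j r) + real N * e"
    by (simp add: sum.distrib)
  have Np: "real N > 0" using N by simp
  have "(1 / real N) * ((\<Sum>j=1..N. fj j p) + (\<Sum>j=1..N. gradj j q \<bullet> v)) \<le> (1 / real N) * ((\<Sum>j=1..N. fj j r) + real N * e)"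
    using s Np by (intro mult_left_mono) auto
  moreover have "gavg N gradj q \<bullet> v = (1 / real N) * (\<Sum>j=1..N. gradj j q \<bullet> v)"
    by (simp add: gavg_def inner_sum_left)
  ultimately show ?thesis using Np unfolding favg_def by (simp add: distrib_left)
qed

lemma avg_desc:
  fixes fj :: "nat \<Rightarrow> real^'n \<Rightarrow> real" and gradj :: "nat \<Rightarrow> real^'n \<Rightarrow> real^'n"
  assumes N: "N \<ge> 1" and h: "\<forall>j\<in>{1..N}. fj j a \<le> fj j b + gradj j b \<bullet> (a - b) + c"
  shows "favg N fj a \<le> favg N fj b + gavg N gradj b \<bullet> (a - b) + c"
proof -
  have "\<forall>j\<in>{1..N}. fj j a + gradj j b \<bullet> (b - a) \<le> fj j b + c"
    using h by (auto simp: inner_diff_right)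
  from avg_gen[OF N, of fj a gradj b "b - a" b c, OF this] show ?thesis by (simp add: inner_diff_right)
qed

lemma avg_gin:
  fixes fj :: "nat \<Rightarrow> real^'n \<Rightarrow> real" and gradj :: "nat \<Rightarrow> real^'n \<Rightarrow> real^'n"
  assumes N: "N \<ge> 1" and h: "\<forall>j\<in>{1..N}. fj j a + gradj j a \<bullet> (b - a) \<le> fj j b"
  shows "favg N fj a + gavg N gradj a \<bullet> (b - a) \<le> favg N fj b"
  using avg_gen[OF N, of fj a gradj a "b - a" b 0] h by simp

lemma y_part:
  fixes g :: "real^'b \<Rightarrow> ereal" and F :: "real^'a \<Rightarrow> real" and A :: "real^'a^'c" and B :: "real^'b^'c"
    and L :: "real^'b^'b" and b lh :: "real^'c" and x1 :: "real^'a" and y1 yk yy :: "real^'b"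
  assumes Y: "convex Y" and g: "proper_convex_on Y g" and SL: "symmetric_mat L"
    and y1: "y1 \<in> Y" and yy: "yy \<in> Y"
    and opt: "\<forall>z\<in>Y. Lagr F g A B b \<beta> x1 y1 lh + ereal (1 / 2 * qf L (y1 - yk))
                   \<le> Lagr F g A B b \<beta> x1 z lh + ereal (1 / 2 * qf L (z - yk))"
  shows "\<exists>G1. g y1 = ereal G1 \<and> (\<forall>Gy. g yy = ereal Gy \<longrightarrow>
     (B *v (yy - y1)) \<bullet> lh - \<beta> * ((A *v x1 + B *v y1 - b) \<bullet> (B *v (yy - y1))) + (yy - y1) \<bullet> (L *v (yk - y1)) \<le> Gy - G1)"
proof -
  define q where "q y = - (lh \<bullet> (A *v x1 + B *v y - b)) + \<beta> / 2 * (norm (A *v x1 + B *v y - b))^2 + 1 / 2 * qf L (y - yk)" for y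
  have Lq: "Lagr F g A B b \<beta> x1 y lh + ereal (1 / 2 * qf L (y - yk)) = ereal (F x1) + g y + ereal (q y)" for y
    unfolding Lagr_def q_def by (simp add: add.assoc)
  have nm: "\<forall>y\<in>Y. g y \<noteq> -\<infinity>" and ex: "\<exists>y\<in>Y. g y \<noteq> \<infinity>"
    and cv: "\<forall>u\<in>Y. \<forall>v\<in>Y. \<forall>t::real. 0 \<le> t \<and> t \<le> 1 \<longrightarrow>
        g ((1 - t) *\<^sub>R u + t *\<^sub>R v) \<le> ereal (1 - t) * g u + ereal t * g v"
    using g unfolding proper_convex_on_def by auto
  obtain y0 where y0: "y0 \<in> Y" "g y0 \<noteq> \<infinity>" using ex by blast
  obtain G0 where G0: "g y0 = ereal G0" using y0 nm by (cases "g y0") auto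
  have "ereal (F x1) + g y1 + ereal (q y1) \<le> ereal (F x1) + g y0 + ereal (q y0)"
    using opt y0 unfolding Lq by blast
  then have "g y1 \<noteq> \<infinity>" using G0 by auto
  then obtain G1 where G1: "g y1 = ereal G1" using y1 nm by (cases "g y1") auto
  have optr: "G1 + q y1 \<le> Gz + q z" if "z \<in> Y" "g z = ereal Gz" for z Gz
  proof -
    have "ereal (F x1) + g y1 + ereal (q y1) \<le> ereal (F x1) + g z + ereal (q z)"
      using opt that unfolding Lq by blast
    then show ?thesis using G1 that by simp
  qed
  show ?thesis
  proof (intro exI conjI allI impI)
    show "g y1 = ereal G1" by (rule G1)
    fix Gy assume Gy: "g yy = ereal Gy"
    define v where "v = yy - y1"
    define r where "r = A *v x1 + B *v y1 - b"
    define Ap where "Ap = - (lh \<bullet> (B *v v)) + \<beta> * (r \<bullet> (B *v v)) + v \<bullet> (L *v (y1 - yk))"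
    define c where "c = \<beta> / 2 * ((B *v v) \<bullet> (B *v v)) + 1 / 2 * qf L v"
    have qexp: "q (y1 + t *\<^sub>R v) = q y1 + t * Ap + t^2 * c" for t
    proof -
      have e1: "A *v x1 + B *v (y1 + t *\<^sub>R v) - b = r + t *\<^sub>R (B *v v)"
        unfolding r_def by (simp add: matrix_vector_right_distrib matrix_vector_mult_scaleR algebra_simps)
      have e2: "y1 + t *\<^sub>R v - yk = (y1 - yk) + t *\<^sub>R v" by simp
      have e3: "(norm (r + t *\<^sub>R (B *v v)))^2 = (norm r)^2 + 2 * t * (r \<bullet> (B *v v)) + t^2 * ((B *v v) \<bullet> (B *v v))"
        unfolding power2_norm_eq_inner by (simp add: inner_add_left inner_add_right inner_commute power2_eq_square algebra_simps)
      have e4: "qf L ((y1 - yk) + t *\<^sub>R v) = qf L (y1 - yk) + 2 * t * ((y1 - yk) \<bullet> (L *v v)) + t^2 * qf L v"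
        unfolding qf_add[OF SL] by (simp add: qf_scale matrix_vector_mult_scaleR)
      have e5: "(y1 - yk) \<bullet> (L *v v) = v \<bullet> (L *v (y1 - yk))" by (rule sym_inner[OF SL])
      have e6: "lh \<bullet> (r + t *\<^sub>R (B *v v)) = lh \<bullet> r + t * (lh \<bullet> (B *v v))" by (simp add: inner_add_right)
      have R: "\<And>a1 a2 n0 n1 n2 l0 l1 l2::real. - (a1 + t * a2) + \<beta> / 2 * (n0 + 2 * t * n1 + t^2 * n2) + 1 / 2 * (l0 + 2 * t * l1 + t^2 * l2)
          = (- a1 + \<beta> / 2 * n0 + 1 / 2 * l0) + t * (- a2 + \<beta> * n1 + l1) + t^2 * (\<beta> / 2 * n2 + 1 / 2 * l2)"
        by (simp add: algebra_simps)
      show ?thesis unfolding q_def e1 e2 e3 e4 e5 e6 Ap_def c_def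
        using R unfolding r_def by simp
    qed
    have "\<forall>t::real. 0 < t \<and> t \<le> 1 \<longrightarrow> 0 \<le> t * (Gy - G1 + Ap) + t^2 * c"
    proof (intro allI impI)
      fix t :: real assume t: "0 < t \<and> t \<le> 1"
      have yt: "y1 + t *\<^sub>R v = (1 - t) *\<^sub>R y1 + t *\<^sub>R yy" by (simp add: v_def algebra_simps)
      have ytY: "y1 + t *\<^sub>R v \<in> Y" unfolding yt using Y y1 yy t by (intro convexD) auto
      have gle: "g (y1 + t *\<^sub>R v) \<le> ereal ((1 - t) * G1 + t * Gy)"
      proof -
        have "g ((1 - t) *\<^sub>R y1 + t *\<^sub>R yy) \<le> ereal (1 - t) * g y1 + ereal t * g yy"
          using cv y1 yy t by auto
        also have "\<dots> = ereal ((1 - t) * G1 + t * Gy)" using G1 Gy by simp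
        finally show ?thesis unfolding yt .
      qed
      then obtain Gt where Gt: "g (y1 + t *\<^sub>R v) = ereal Gt" "Gt \<le> (1 - t) * G1 + t * Gy"
        using nm ytY by (cases "g (y1 + t *\<^sub>R v)") auto
      have "G1 + q y1 \<le> Gt + q (y1 + t *\<^sub>R v)" by (rule optr[OF ytY Gt(1)])
      then show "0 \<le> t * (Gy - G1 + Ap) + t^2 * c" using Gt(2) qexp[of t] by (simp add: algebra_simps)
    qed
    then have "0 \<le> Gy - G1 + Ap" by (rule lin_quad_nonneg)
    moreover have "v \<bullet> (L *v (y1 - yk)) = - (v \<bullet> (L *v (yk - y1)))"
      by (simp add: matrix_vector_mult_diff_distrib inner_diff_right)
    ultimately show "(B *v (yy - y1)) \<bullet> lh - \<beta> * ((A *v x1 + B *v y1 - b) \<bullet> (B *v (yy - y1))) + (yy - y1) \<bullet> (L *v (yk - y1)) \<le> Gy - G1"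
      unfolding Ap_def v_def r_def by (simp add: inner_commute)
  qed
qed

lemma tB_inner: "v \<bullet> (transpose (B::real^'b^'c) *v l) = (B *v v) \<bullet> l"
  by (simp add: dot_lmul_matrix[symmetric] inner_commute)

lemma scaleR_mv: "((c::real) *\<^sub>R (K::real^'m^'n)) *v v = c *\<^sub>R (K *v v)"
  by (simp add: scaleR_matrix_vector_assoc)

lemma neg_mv: "(- (K::real^'m^'n)) *v v = - (K *v v)"
  by (simp add: matrix_vector_mult_def vec_eq_iff sum_negf)

lemma Qt_exp:
  "Qtilde_qf D L B \<beta> \<tau> s (u, v, l) = qf D u + qf L v + ((1 - \<tau> * s / (\<tau> + s)) * \<beta>) * ((B *v v) \<bullet> (B *v v))
     + 2 * (- \<tau> / (\<tau> + s)) * ((B *v v) \<bullet> l) + 1 / (\<beta> * (\<tau> + s)) * (l \<bullet> l)"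
  unfolding Qtilde_qf_def block3_qf_def
  using qf_at[of B v] tB_inner[of v B l]
  by (simp add: matrix_vector_mult_add_rdistrib scaleR_mv neg_mv inner_add_right qf_def inner_commute algebra_simps)

lemma Gt_exp:
  "Gtilde_qf D L B \<beta> \<tau> s (u, v, l) = qf D u + qf L v + ((1 - s) * \<beta>) * ((B *v v) \<bullet> (B *v v))
     + 2 * (s - 1) * ((B *v v) \<bullet> l) + (2 - \<tau> - s) / \<beta> * (l \<bullet> l)"
  unfolding Gtilde_qf_def block3_qf_def
  using qf_at[of B v] tB_inner[of v B l]
  by (simp add: matrix_vector_mult_add_rdistrib scaleR_mv neg_mv inner_add_right qf_def inner_commute algebra_simps)
lemma lam_identity:
  fixes Aa Ac P u1 u2 u3 ll lk :: "'a::real_inner" and \<beta> \<tau> s :: real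
  assumes b: "\<beta> > 0" and ts: "\<tau> + s > 0"
  shows "Aa \<bullet> (lk - \<beta> *\<^sub>R (P - Ac)) - \<beta> * (Aa \<bullet> Ac)
   + (u1 - u2) \<bullet> (lk - (\<tau>*\<beta>) *\<^sub>R P) - \<beta> * ((P + u2 - u3) \<bullet> (u1 - u2))
   + (- (Aa \<bullet> ll) - (u1 - u2) \<bullet> ll + (ll - (lk - \<beta> *\<^sub>R P)) \<bullet> (Aa + P - u3 + u1))
   = 1/2 * ( ((1 - \<tau> * s/(\<tau>+s))*\<beta>) * ((u1-u2) \<bullet> (u1-u2))
              + 2 * (- \<tau>/(\<tau>+s)) * ((u1-u2) \<bullet> (ll - ((lk - (\<tau>*\<beta>) *\<^sub>R P) - (s*\<beta>) *\<^sub>R (P + u2 - u3))))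
              + 1/(\<beta>*(\<tau>+s)) * ((ll - ((lk - (\<tau>*\<beta>) *\<^sub>R P) - (s*\<beta>) *\<^sub>R (P + u2 - u3))) \<bullet> (ll - ((lk - (\<tau>*\<beta>) *\<^sub>R P) - (s*\<beta>) *\<^sub>R (P + u2 - u3))))
            - ( ((1 - \<tau> * s/(\<tau>+s))*\<beta>) * ((u1-u3) \<bullet> (u1-u3))
              + 2 * (- \<tau>/(\<tau>+s)) * ((u1-u3) \<bullet> (ll - lk))
              + 1/(\<beta>*(\<tau>+s)) * ((ll - lk) \<bullet> (ll - lk)))
            + ( ((1 - s)*\<beta>) * ((u3-u2) \<bullet> (u3-u2))
              + 2 * (s - 1) * ((u3-u2) \<bullet> (lk - (lk - \<beta> *\<^sub>R P)))
              + (2 - \<tau> - s)/\<beta> * ((lk - (lk - \<beta> *\<^sub>R P)) \<bullet> (lk - (lk - \<beta> *\<^sub>R P)))))"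
proof -
  have nz: "\<tau> + s \<noteq> 0" "\<beta> \<noteq> 0" using b ts by auto
  show ?thesis
    using nz
    apply (simp add: inner_add_left inner_add_right inner_diff_left inner_diff_right inner_scaleR_left inner_scaleR_right)
    apply (simp add: inner_commute)
    apply (simp add: divide_simps)
    apply (simp add: algebra_simps)
    done
qed

lemma qf_neg: "qf G (- v) = qf G v" using qf_scale[of G "-1" v] by simp

lemma qf_tA: "qf (M - \<beta> *\<^sub>R (transpose A ** A)) v = qf M v - \<beta> * ((A *v v) \<bullet> (A *v v))"
  using qf_at[of A v] by (simp add: qf_def matrix_vector_mult_diff_rdistrib scaleR_mv inner_diff_right)

lemma tA_inner: "(transpose (A::real^'a^'c) *v l) \<bullet> x = (A *v x) \<bullet> l"
  using tB_inner[of x A l] by (simp add: inner_commute)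

lemma final_identity:
  fixes A :: "real^'a^'c" and B :: "real^'b^'c" and b ll lk lh l1 lt :: "real^'c"
    and M :: "real^'a^'a" and L :: "real^'b^'b" and xx x1 xk :: "real^'a" and yy y1 yk :: "real^'b"
    and \<beta> \<tau> s :: real
  assumes SM: "symmetric_mat M" and SL: "symmetric_mat L" and b: "\<beta> > 0" and ts: "\<tau> + s > 0"
    and lh: "lh = lk - (\<tau> * \<beta>) *\<^sub>R (A *v x1 + B *v yk - b)"
    and l1: "l1 = lh - (s * \<beta>) *\<^sub>R (A *v x1 + B *v y1 - b)"
    and lt: "lt = lk - \<beta> *\<^sub>R (A *v x1 + B *v yk - b)"
  shows "(- (transpose A *v (lk - \<beta> *\<^sub>R (A *v xk + B *v yk - b)))) \<bullet> (x1 - xx)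
       + 1/2 * qf M (x1 - xk) - 1/2 * qf M (xx - xk) + 1/2 * qf M (xx - x1)
     + ((B *v (yy - y1)) \<bullet> lh - \<beta> * ((A *v x1 + B *v y1 - b) \<bullet> (B *v (yy - y1))) + (yy - y1) \<bullet> (L *v (yk - y1)))
     + ((xx, yy, ll) - (x1, y1, lt)) \<bullet> (- (transpose A *v ll), - (transpose B *v ll), A *v xx + B *v yy - b)
   = 1/2 * (Qtilde_qf (M - \<beta> *\<^sub>R (transpose A ** A)) L B \<beta> \<tau> s ((xx, yy, ll) - (x1, y1, l1))
          - Qtilde_qf (M - \<beta> *\<^sub>R (transpose A ** A)) L B \<beta> \<tau> s ((xx, yy, ll) - (xk, yk, lk))
          + Gtilde_qf (M - \<beta> *\<^sub>R (transpose A ** A)) L B \<beta> \<tau> s ((xk, yk, lk) - (x1, y1, lt)))"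
proof -
  define a where "a = xx - x1"
  define c where "c = x1 - xk"
  define v where "v = yy - y1"
  define e where "e = yk - y1"
  define Aa where "Aa = A *v a"
  define Ac where "Ac = A *v c"
  define P where "P = A *v x1 + B *v yk - b"
  define u1 where "u1 = B *v yy"
  define u2 where "u2 = B *v y1"
  define u3 where "u3 = B *v yk"
  have xs: "xx - x1 = a" "x1 - xk = c" "xx - xk = a + c" "xk - x1 = - c" "x1 - xx = - a"
    by (simp_all add: a_def c_def)
  have ys: "yy - y1 = v" "yk - y1 = e" "yy - yk = v - e" by (simp_all add: v_def e_def)
  have Bs: "B *v v = u1 - u2" "B *v (v - e) = u1 - u3" "B *v e = u3 - u2"
    by (simp_all add: v_def e_def u1_def u2_def u3_def matrix_vector_mult_diff_distrib)
  have As: "A *v (a + c) = Aa + Ac" by (simp add: Aa_def Ac_def matrix_vector_right_distrib)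
  have r1: "A *v xk + B *v yk - b = P - Ac"
    by (simp add: P_def Ac_def c_def matrix_vector_mult_diff_distrib)
  have r2: "A *v x1 + B *v y1 - b = P + u2 - u3" by (simp add: P_def u2_def u3_def)
  have r3: "A *v xx + B *v yy - b = Aa + P - u3 + u1"
    by (simp add: P_def u1_def u3_def Aa_def a_def matrix_vector_mult_diff_distrib)
  have lh': "lh = lk - (\<tau> * \<beta>) *\<^sub>R P" using lh by (simp add: P_def)
  have l1': "l1 = (lk - (\<tau> * \<beta>) *\<^sub>R P) - (s * \<beta>) *\<^sub>R (P + u2 - u3)" using l1 lh' r2 by simp
  have lt': "lt = lk - \<beta> *\<^sub>R P" using lt by (simp add: P_def)
  have hx: "(- (transpose A *v (lk - \<beta> *\<^sub>R (P - Ac)))) \<bullet> (- a) = Aa \<bullet> (lk - \<beta> *\<^sub>R (P - Ac))"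
    using tA_inner[of A "lk - \<beta> *\<^sub>R (P - Ac)" a] by (simp add: Aa_def inner_commute)
  have qMac: "qf M (a + c) = qf M a + 2 * (a \<bullet> (M *v c)) + qf M c" by (rule qf_add[OF SM])
  have qDa: "qf (M - \<beta> *\<^sub>R (transpose A ** A)) a = qf M a - \<beta> * (Aa \<bullet> Aa)" by (simp add: qf_tA Aa_def)
  have qDc: "qf (M - \<beta> *\<^sub>R (transpose A ** A)) (- c) = qf M c - \<beta> * (Ac \<bullet> Ac)" by (simp add: qf_neg qf_tA Ac_def)
  have qDac: "qf (M - \<beta> *\<^sub>R (transpose A ** A)) (a + c) = qf M (a + c) - \<beta> * ((Aa + Ac) \<bullet> (Aa + Ac))"
    by (simp add: qf_tA As)
  have AAc: "(Aa + Ac) \<bullet> (Aa + Ac) = Aa \<bullet> Aa + 2 * (Aa \<bullet> Ac) + Ac \<bullet> Ac"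
    by (simp add: inner_add_left inner_add_right inner_commute)
  have qLve: "qf L (v - e) = qf L v - 2 * (v \<bullet> (L *v e)) + qf L e" by (rule qf_diff[OF SL])
  have qLe: "qf L (- e) = qf L e" by (rule qf_neg)
  have J: "((xx, yy, ll) - (x1, y1, lt)) \<bullet> (- (transpose A *v ll), - (transpose B *v ll), A *v xx + B *v yy - b)
      = - (Aa \<bullet> ll) - (u1 - u2) \<bullet> ll + (ll - (lk - \<beta> *\<^sub>R P)) \<bullet> (Aa + P - u3 + u1)"
    unfolding diff_Pair inner_Pair xs ys r3 lt'
    using tA_inner[of A ll a] tB_inner[of v B ll] Bs(1) by (simp add: Aa_def inner_commute)
  have Q1: "Qtilde_qf (M - \<beta> *\<^sub>R (transpose A ** A)) L B \<beta> \<tau> s ((xx, yy, ll) - (x1, y1, l1))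
     = (qf M a - \<beta> * (Aa \<bullet> Aa)) + qf L v + ((1 - \<tau> * s / (\<tau> + s)) * \<beta>) * ((u1 - u2) \<bullet> (u1 - u2))
     + 2 * (- \<tau> / (\<tau> + s)) * ((u1 - u2) \<bullet> (ll - ((lk - (\<tau> * \<beta>) *\<^sub>R P) - (s * \<beta>) *\<^sub>R (P + u2 - u3))))
     + 1 / (\<beta> * (\<tau> + s)) * ((ll - ((lk - (\<tau> * \<beta>) *\<^sub>R P) - (s * \<beta>) *\<^sub>R (P + u2 - u3))) \<bullet> (ll - ((lk - (\<tau> * \<beta>) *\<^sub>R P) - (s * \<beta>) *\<^sub>R (P + u2 - u3))))"
    unfolding diff_Pair Qt_exp xs ys Bs qDa l1' ..
  have Q2: "Qtilde_qf (M - \<beta> *\<^sub>R (transpose A ** A)) L B \<beta> \<tau> s ((xx, yy, ll) - (xk, yk, lk))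
     = (qf M a + 2 * (a \<bullet> (M *v c)) + qf M c - \<beta> * (Aa \<bullet> Aa + 2 * (Aa \<bullet> Ac) + Ac \<bullet> Ac)) + qf L (v - e) + ((1 - \<tau> * s / (\<tau> + s)) * \<beta>) * ((u1 - u3) \<bullet> (u1 - u3))
     + 2 * (- \<tau> / (\<tau> + s)) * ((u1 - u3) \<bullet> (ll - lk))
     + 1 / (\<beta> * (\<tau> + s)) * ((ll - lk) \<bullet> (ll - lk))"
    unfolding diff_Pair Qt_exp xs ys Bs qDac qMac AAc ..
  have G1: "Gtilde_qf (M - \<beta> *\<^sub>R (transpose A ** A)) L B \<beta> \<tau> s ((xk, yk, lk) - (x1, y1, lt))
     = (qf M c - \<beta> * (Ac \<bullet> Ac)) + qf L e + ((1 - s) * \<beta>) * ((u3 - u2) \<bullet> (u3 - u2))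
     + 2 * (s - 1) * ((u3 - u2) \<bullet> (lk - (lk - \<beta> *\<^sub>R P)))
     + (2 - \<tau> - s) / \<beta> * ((lk - (lk - \<beta> *\<^sub>R P)) \<bullet> (lk - (lk - \<beta> *\<^sub>R P)))"
    unfolding diff_Pair Gt_exp xs ys Bs qDc lt' ..
  note LAM = lam_identity[OF b ts, of Aa lk P Ac u1 u2 u3 ll]
  have LHSx: "(- (transpose A *v (lk - \<beta> *\<^sub>R (A *v xk + B *v yk - b)))) \<bullet> (x1 - xx)
       + 1/2 * qf M (x1 - xk) - 1/2 * qf M (xx - xk) + 1/2 * qf M (xx - x1)
     = Aa \<bullet> (lk - \<beta> *\<^sub>R (P - Ac)) + 1/2 * qf M c - 1/2 * (qf M a + 2 * (a \<bullet> (M *v c)) + qf M c) + 1/2 * qf M a"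
    unfolding r1 xs hx qMac ..
  have LHSy: "(B *v (yy - y1)) \<bullet> lh - \<beta> * ((A *v x1 + B *v y1 - b) \<bullet> (B *v (yy - y1))) + (yy - y1) \<bullet> (L *v (yk - y1))
     = (u1 - u2) \<bullet> (lk - (\<tau> * \<beta>) *\<^sub>R P) - \<beta> * ((P + u2 - u3) \<bullet> (u1 - u2)) + v \<bullet> (L *v e)"
    unfolding ys Bs r2 lh' ..
  show ?thesis unfolding LHSx LHSy J Q1 Q2 G1 qLve using LAM by (simp add: algebra_simps)
qed

lemma memb_inner:
  assumes X: "convex X" and init: "xi 1 \<in> X" "bxi 1 \<in> X"
    and step: "\<forall>t. 1 \<le> t \<and> t \<le> m \<longrightarrow> bxi (t+1) \<in> X \<and>
                   xi (t+1) = (2/(real t+1)) *\<^sub>R bxi (t+1) + (1 - 2/(real t+1)) *\<^sub>R xi t"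
  shows "\<forall>n. n \<le> m \<longrightarrow> xi (n+1) \<in> X \<and> bxi (n+1) \<in> X"
proof (intro allI)
  fix n show "n \<le> m \<longrightarrow> xi (n+1) \<in> X \<and> bxi (n+1) \<in> X"
  proof (induction n)
    case 0 then show ?case using init by simp
  next
    case (Suc n)
    show ?case
    proof
      assume le: "Suc n \<le> m"
      then have IH: "xi (n+1) \<in> X" using Suc.IH by simp
      have st: "bxi (n+1+1) \<in> X \<and> xi (n+1+1) = (2/(real (n+1)+1)) *\<^sub>R bxi (n+1+1) + (1 - 2/(real (n+1)+1)) *\<^sub>R xi (n+1)"
        using step le by auto
      have "0 \<le> 2/(real (n+1)+1)" "2/(real (n+1)+1) \<le> 1" by auto
      then have "xi (n+1+1) \<in> X" using st IH by (auto intro!: convexD[OF X])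
      then show "xi (Suc n+1) \<in> X \<and> bxi (Suc n+1) \<in> X" using st by simp
    qed
  qed
qed

theorem corollary3p1:
  fixes X :: "(real^'n1) set" and Y :: "(real^'n2) set"
    and A :: "real^'n1^'n" and B :: "real^'n2^'n" and b :: "real^'n"
    and g :: "real^'n2 \<Rightarrow> ereal"
    and N :: nat and fj :: "nat \<Rightarrow> real^'n1 \<Rightarrow> real" and gradj :: "nat \<Rightarrow> real^'n1 \<Rightarrow> real^'n1"
    and U :: "(real^'n1) set"
    and H :: "real^'n1^'n1" and \<nu> :: real
    and \<beta> :: real and L :: "real^'n2^'n2" and \<tau> s :: real
    and x :: "nat \<Rightarrow> real^'n1" and y :: "nat \<Rightarrow> real^'n2" and lam :: "nat \<Rightarrow> real^'n"
    and bx :: "nat \<Rightarrow> real^'n1" and lamh :: "nat \<Rightarrow> real^'n"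
    and m :: "nat \<Rightarrow> nat" and \<eta> :: "nat \<Rightarrow> real" and M :: "nat \<Rightarrow> real^'n1^'n1"
    and xi bxi xh e :: "nat \<Rightarrow> nat \<Rightarrow> real^'n1" and \<xi> :: "nat \<Rightarrow> nat \<Rightarrow> nat"
    and k :: nat
  assumes X: "closed X" "convex X" "X \<noteq> {}"
    and Y: "closed Y" "convex Y" "Y \<noteq> {}"
    and g: "proper_convex_on Y g"
    and N: "N \<ge> 1"
    and U: "open U" "X \<subseteq> U"
    and fj_diff: "\<forall>j\<in>{1..N}. \<forall>z\<in>U. (fj j has_derivative (\<lambda>h. gradj j z \<bullet> h)) (at z)"
    and fj_C1: "\<forall>j\<in>{1..N}. continuous_on U (gradj j)"
    and fj_convex: "\<forall>j\<in>{1..N}. convex_on X (fj j)"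
    and H: "pd H" and \<nu>: "\<nu> > 0"
    and lip: "\<forall>j\<in>{1..N}. \<forall>x1\<in>X. \<forall>x2\<in>X.
               sqrt (qf (matrix_inv H) (gradj j x1 - gradj j x2)) \<le> \<nu> * sqrt (qf H (x1 - x2))"
    and \<beta>: "\<beta> > 0" and L: "psd L" and \<tau>s: "(\<tau>, s) \<in> Delta_set"
    and init: "x 0 \<in> X" "y 0 \<in> Y" "bx 0 = x 0"
    and params: "\<forall>j. m j \<ge> 1 \<and> \<eta> j > 0 \<and> symmetric_mat (M j)
                    \<and> psd (M j - \<beta> *\<^sub>R (transpose A ** A))"
    and xsub_init: "\<forall>j. xi j 1 = x j \<and> bxi j 1 = bx j"
    and xsub_step: "\<forall>j t. 1 \<le> t \<and> t \<le> m j \<longrightarrow>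
          (let \<beta>t = 2 / (real t + 1);
               \<gamma>t = 2 / (real t * \<eta> j);
               hj = - (transpose A *v (lam j - \<beta> *\<^sub>R (A *v x j + B *v y j - b)));
               dt = gradj (\<xi> j t) (xh j t) + e j t
           in \<xi> j t \<in> {1..N}
              \<and> xh j t = \<beta>t *\<^sub>R bxi j t + (1 - \<beta>t) *\<^sub>R xi j t
              \<and> bxi j (t + 1) \<in> X
              \<and> (\<forall>z\<in>X. (dt + hj) \<bullet> bxi j (t + 1) + \<gamma>t / 2 * qf H (bxi j (t + 1) - bxi j t)
                           + 1 / 2 * qf (M j) (bxi j (t + 1) - x j)
                         \<le> (dt + hj) \<bullet> z + \<gamma>t / 2 * qf H (z - bxi j t) + 1 / 2 * qf (M j) (z - x j))
              \<and> xi j (t + 1) = \<beta>t *\<^sub>R bxi j (t + 1) + (1 - \<beta>t) *\<^sub>R xi j t)"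
    and xsub_out: "\<forall>j. x (j + 1) = xi j (m j + 1) \<and> bx (j + 1) = bxi j (m j + 1)"
    and lam_half: "\<forall>j. lamh j = lam j - (\<tau> * \<beta>) *\<^sub>R (A *v x (j + 1) + B *v y j - b)"
    and y_step: "\<forall>j. y (j + 1) \<in> Y \<and>
          (\<forall>z\<in>Y. Lagr (favg N fj) g A B b \<beta> (x (j + 1)) (y (j + 1)) (lamh j)
                     + ereal (1 / 2 * qf L (y (j + 1) - y j))
                   \<le> Lagr (favg N fj) g A B b \<beta> (x (j + 1)) z (lamh j)
                     + ereal (1 / 2 * qf L (z - y j)))"
    and lam_step: "\<forall>j. lam (j + 1) = lamh j - (s * \<beta>) *\<^sub>R (A *v x (j + 1) + B *v y (j + 1) - b)"
    and \<eta>k: "0 < \<eta> k" "\<eta> k < 1 / \<nu>"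
  shows "\<forall>xx\<in>X. \<forall>yy\<in>Y. \<forall>ll::real^'n.
    (let w = (xx, yy, ll);
         wk = (x k, y k, lam k);
         wk1 = (x (k + 1), y (k + 1), lam (k + 1));
         lt = lam k - \<beta> *\<^sub>R (A *v x (k + 1) + B *v y k - b);
         wt = (x (k + 1), y (k + 1), lt);
         Jw = (- (transpose A *v ll), - (transpose B *v ll), A *v xx + B *v yy - b);
         Dk = M k - \<beta> *\<^sub>R (transpose A ** A);
         \<delta> = (\<lambda>t. gavg N gradj (xh k t) - (gradj (\<xi> k t) (xh k t) + e k t))
     in (ereal (favg N fj xx) + g yy) - (ereal (favg N fj (x (k + 1))) + g (y (k + 1)))
          + ereal ((w - wt) \<bullet> Jw)
        \<ge> ereal (1 / 2 * (Qtilde_qf Dk L B \<beta> \<tau> s (w - wk1) - Qtilde_qf Dk L B \<beta> \<tau> s (w - wk)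
                          + Gtilde_qf Dk L B \<beta> \<tau> s (wk - wt))
                 + zeta H \<nu> (\<eta> k) (m k) (bx k) (bx (k + 1)) (bxi k) \<delta> xx))"

proof -
  have Xc: "convex X" using X by simp
  have Yc: "convex Y" using Y by simp
  have SH: "symmetric_mat H" using H by (simp add: pd_def)
  have SL: "symmetric_mat L" using L by (simp add: psd_def)
  have ts: "\<tau> + s > 0" using \<tau>s by (simp add: Delta_set_def)
  have etak: "0 < \<eta> k" "\<eta> k * \<nu> < 1" using \<eta>k \<nu> by (auto simp: pos_less_divide_eq)
  have desc: "\<forall>a\<in>X. \<forall>b\<in>X. favg N fj a \<le> favg N fj b + gavg N gradj b \<bullet> (a - b) + \<nu> / 2 * qf H (a - b)"
  proof (intro ballI)
    fix a b assume a: "a \<in> X" and b: "b \<in> X"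
    show "favg N fj a \<le> favg N fj b + gavg N gradj b \<bullet> (a - b) + \<nu> / 2 * qf H (a - b)"
    proof (rule avg_desc[OF N], intro ballI)
      fix j assume j: "j \<in> {1..N}"
      show "fj j a \<le> fj j b + gradj j b \<bullet> (a - b) + \<nu> / 2 * qf H (a - b)"
        by (rule descent_j[OF Xc U(2) _ H \<nu> _ a b]) (use fj_diff lip j in auto)
    qed
  qed
  have gin: "\<forall>a\<in>X. \<forall>b\<in>X. favg N fj a + gavg N gradj a \<bullet> (b - a) \<le> favg N fj b"
  proof (intro ballI)
    fix a b assume a: "a \<in> X" and b: "b \<in> X"
    show "favg N fj a + gavg N gradj a \<bullet> (b - a) \<le> favg N fj b"
    proof (rule avg_gin[OF N], intro ballI)
      fix j assume j: "j \<in> {1..N}"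
      show "fj j a + gradj j a \<bullet> (b - a) \<le> fj j b"
        by (rule grad_ineq_j[OF Xc U(2) _ _ a b]) (use fj_diff fj_convex j in auto)
    qed
  qed
  have stepall: "\<forall>j t. 1 \<le> t \<and> t \<le> m j \<longrightarrow>
        xh j t = (2/(real t+1)) *\<^sub>R bxi j t + (1 - 2/(real t+1)) *\<^sub>R xi j t
      \<and> bxi j (t+1) \<in> X
      \<and> (\<forall>z\<in>X. (gradj (\<xi> j t) (xh j t) + e j t + (- (transpose A *v (lam j - \<beta> *\<^sub>R (A *v x j + B *v y j - b))))) \<bullet> bxi j (t+1)
                   + (2/(real t*\<eta> j)) / 2 * qf H (bxi j (t+1) - bxi j t) + 1 / 2 * qf (M j) (bxi j (t+1) - x j)
                  \<le> (gradj (\<xi> j t) (xh j t) + e j t + (- (transpose A *v (lam j - \<beta> *\<^sub>R (A *v x j + B *v y j - b))))) \<bullet> z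
                   + (2/(real t*\<eta> j)) / 2 * qf H (z - bxi j t) + 1 / 2 * qf (M j) (z - x j))
      \<and> xi j (t+1) = (2/(real t+1)) *\<^sub>R bxi j (t+1) + (1 - 2/(real t+1)) *\<^sub>R xi j t"
    using xsub_step unfolding Let_def by blast
  have memall: "\<forall>j. x j \<in> X \<and> bx j \<in> X"
  proof
    fix j show "x j \<in> X \<and> bx j \<in> X"
    proof (induction j)
      case 0 then show ?case using init by simp
    next
      case (Suc j)
      have "\<forall>n. n \<le> m j \<longrightarrow> xi j (n+1) \<in> X \<and> bxi j (n+1) \<in> X"
        by (rule memb_inner[OF Xc]) (use Suc.IH xsub_init stepall in auto)
      then show ?case using xsub_out by (metis Suc_eq_plus1 le_refl)
    qed
  qed
  have SM: "symmetric_mat (M k)" using params by blast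
  have PM: "\<forall>v. 0 \<le> qf (M k) v"
  proof
    fix v
    have "0 \<le> qf (M k - \<beta> *\<^sub>R (transpose A ** A)) v" using params by (auto simp: psd_def)
    moreover have "0 \<le> \<beta> * ((A *v v) \<bullet> (A *v v))" using \<beta> by simp
    ultimately show "0 \<le> qf (M k) v" unfolding qf_tA by linarith
  qed
  show ?thesis
    unfolding Let_def
  proof (intro ballI allI)
    fix xx yy ll assume xx: "xx \<in> X" and yy: "yy \<in> Y"
    define hk where "hk = - (transpose A *v (lam k - \<beta> *\<^sub>R (A *v x k + B *v y k - b)))"
    define d where "d = (\<lambda>t. gradj (\<xi> k t) (xh k t) + e k t)"
    have XP: "Phi (favg N fj) hk (M k) (x k) (xi k (m k+1)) - Phi (favg N fj) hk (M k) (x k) xx + 1/2 * qf (M k) (xx - xi k (m k+1))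
          \<le> - zeta H \<nu> (\<eta> k) (m k) (bxi k 1) (bxi k (m k+1)) (bxi k) (\<lambda>t. gavg N gradj (xh k t) - d t) xx"
    proof (rule x_part[where F = "favg N fj" and Gr = "gavg N gradj" and M = "M k" and h = hk and xk = "x k"
            and xi = "xi k" and bxi = "bxi k" and xh = "xh k" and d = d and \<eta> = "\<eta> k" and m = "m k", OF Xc desc gin H SM PM \<nu> etak])
      show "xi k 1 \<in> X" "bxi k 1 \<in> X" using memall xsub_init by auto
      show "xx \<in> X" by (rule xx)
      show "1 \<le> m k" using params by blast
      show "\<forall>t. 1 \<le> t \<and> t \<le> m k \<longrightarrow>
        xh k t = (2/(real t+1)) *\<^sub>R bxi k t + (1 - 2/(real t+1)) *\<^sub>R xi k t
      \<and> bxi k (t+1) \<in> X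
      \<and> (\<forall>z\<in>X. (d t + hk) \<bullet> bxi k (t+1) + (2/(real t*\<eta> k)) / 2 * qf H (bxi k (t+1) - bxi k t) + 1 / 2 * qf (M k) (bxi k (t+1) - x k)
                  \<le> (d t + hk) \<bullet> z + (2/(real t*\<eta> k)) / 2 * qf H (z - bxi k t) + 1 / 2 * qf (M k) (z - x k))
      \<and> xi k (t+1) = (2/(real t+1)) *\<^sub>R bxi k (t+1) + (1 - 2/(real t+1)) *\<^sub>R xi k t"
        using stepall unfolding d_def hk_def by blast
    qed
    have y1Y: "y (k+1) \<in> Y" using y_step by blast
    have optY: "\<forall>z\<in>Y. Lagr (favg N fj) g A B b \<beta> (x (k + 1)) (y (k + 1)) (lamh k) + ereal (1 / 2 * qf L (y (k + 1) - y k))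
                   \<le> Lagr (favg N fj) g A B b \<beta> (x (k + 1)) z (lamh k) + ereal (1 / 2 * qf L (z - y k))"
      using y_step by blast
    obtain G1 where G1: "g (y (k+1)) = ereal G1"
      and YP: "\<And>Gy. g yy = ereal Gy \<Longrightarrow>
     (B *v (yy - y (k+1))) \<bullet> lamh k - \<beta> * ((A *v x (k+1) + B *v y (k+1) - b) \<bullet> (B *v (yy - y (k+1)))) + (yy - y (k+1)) \<bullet> (L *v (y k - y (k+1))) \<le> Gy - G1"
      using y_part[OF Yc g SL y1Y yy optY] by blast
    note FI = final_identity[where xx = xx and xk = "x k" and yy = yy and ll = ll, OF SM SL \<beta> ts lam_half[rule_format, of k] lam_step[rule_format, of k] refl]
    have xo: "xi k (m k+1) = x (k+1)" "bxi k (m k+1) = bx (k+1)" "bxi k 1 = bx k"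
      using xsub_out xsub_init by auto
    define J where "J = ((xx, yy, ll) - (x (k + 1), y (k + 1), lam k - \<beta> *\<^sub>R (A *v x (k + 1) + B *v y k - b))) \<bullet>
           (- (transpose A *v ll), - (transpose B *v ll), A *v xx + B *v yy - b)"
    define RH where "RH = 1 / 2 * (Qtilde_qf (M k - \<beta> *\<^sub>R (transpose A ** A)) L B \<beta> \<tau> s ((xx, yy, ll) - (x (k + 1), y (k + 1), lam (k + 1))) -
                  Qtilde_qf (M k - \<beta> *\<^sub>R (transpose A ** A)) L B \<beta> \<tau> s ((xx, yy, ll) - (x k, y k, lam k)) +
                  Gtilde_qf (M k - \<beta> *\<^sub>R (transpose A ** A)) L B \<beta> \<tau> s ((x k, y k, lam k) - (x (k + 1), y (k + 1), lam k - \<beta> *\<^sub>R (A *v x (k + 1) + B *v y k - b))))"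
    define Z where "Z = zeta H \<nu> (\<eta> k) (m k) (bx k) (bx (k + 1)) (bxi k) (\<lambda>t. gavg N gradj (xh k t) - (gradj (\<xi> k t) (xh k t) + e k t)) xx"
    have XP': "favg N fj (x (k+1)) + hk \<bullet> x (k+1) + 1/2 * qf (M k) (x (k+1) - x k) - (favg N fj xx + hk \<bullet> xx + 1/2 * qf (M k) (xx - x k))
        + 1/2 * qf (M k) (xx - x (k+1)) \<le> - Z"
      using XP unfolding xo Phi_def Z_def d_def .
    have FI': "hk \<bullet> (x (k+1) - xx) + 1/2 * qf (M k) (x (k+1) - x k) - 1/2 * qf (M k) (xx - x k) + 1/2 * qf (M k) (xx - x (k+1))
     + ((B *v (yy - y (k+1))) \<bullet> lamh k - \<beta> * ((A *v x (k+1) + B *v y (k+1) - b) \<bullet> (B *v (yy - y (k+1)))) + (yy - y (k+1)) \<bullet> (L *v (y k - y (k+1))))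
     + J = RH"
      using FI unfolding hk_def J_def RH_def .
    have hd: "hk \<bullet> (x (k+1) - xx) = hk \<bullet> x (k+1) - hk \<bullet> xx" by (simp add: inner_diff_right)
    have gnm: "g yy \<noteq> -\<infinity>" using g yy by (auto simp: proper_convex_on_def)
    have C: "ereal (RH + Z) \<le> ereal (favg N fj xx) + g yy - (ereal (favg N fj (x (k + 1))) + g (y (k + 1))) + ereal J"
    proof (cases "g yy")
      case (real Gy)
      have "RH + Z \<le> favg N fj xx + Gy - (favg N fj (x (k+1)) + G1) + J"
        using XP' FI' YP[OF real] hd by linarith
      then show ?thesis using real G1 by simp
    next
      case PInf
      then show ?thesis using G1 by simp
    next
      case MInf
      then show ?thesis using gnm by simp
    qed
    from C show "ereal (1 / 2 * (Qtilde_qf (M k - \<beta> *\<^sub>R (transpose A ** A)) L B \<beta> \<tau> s ((xx, yy, ll) - (x (k + 1), y (k + 1), lam (k + 1))) -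
                  Qtilde_qf (M k - \<beta> *\<^sub>R (transpose A ** A)) L B \<beta> \<tau> s ((xx, yy, ll) - (x k, y k, lam k)) +
                  Gtilde_qf (M k - \<beta> *\<^sub>R (transpose A ** A)) L B \<beta> \<tau> s ((x k, y k, lam k) - (x (k + 1), y (k + 1), lam k - \<beta> *\<^sub>R (A *v x (k + 1) + B *v y k - b)))) +
           zeta H \<nu> (\<eta> k) (m k) (bx k) (bx (k + 1)) (bxi k) (\<lambda>t. gavg N gradj (xh k t) - (gradj (\<xi> k t) (xh k t) + e k t)) xx)
       \<le> ereal (favg N fj xx) + g yy - (ereal (favg N fj (x (k + 1))) + g (y (k + 1))) +
          ereal (((xx, yy, ll) - (x (k + 1), y (k + 1), lam k - \<beta> *\<^sub>R (A *v x (k + 1) + B *v y k - b))) \<bullet>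
                 (- (transpose A *v ll), - (transpose B *v ll), A *v xx + B *v yy - b))"
      unfolding RH_def Z_def J_def .
  qed
qed

end
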